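(* Assume the Construction below and set $X=\bigcap_{n\geq0}X_n$. Then $X$ is a polynomially convex horizontal subset of $D(0,1/2)\times\mathbb{D}$, and $X\cap\big(D(0,1/5)\times\mathbb{D}\big)$ does not contain any holomorphic disk.
   Context: Notation: $D(a,r)$ is the open disk of center $a$ and radius $r$ in $\mathbb{C}$, $\mathbb{D}=D(0,1)$, and $\mathbb{Z}^2$ is identified with the Gaussian integers $\mathbb{Z}+i\mathbb{Z}\subset\mathbb{C}$. A subset of $D(0,1/2)\times\mathbb{D}$ is called horizontal if it is contained in $D(0,1/2)\times D(0,1-\varepsilon)$ for some $\varepsilon>0$. Construction. Let $(a_n)_{n\geq1}$ be a sequence of points of $D(0,1/4)$ such that both subsequences $(a_{2p})$ and $(a_{2p+1})$ are dense in $D(0,1/4)$. Put $A_n(z,w)=z-a_n$ if $n$ is odd and $A_n(z,w)=z+\frac{w}{100}-a_n$ if $n$ is even. Let $(r_n)_{n\geq1}$ be a sequence of positive reals decreasing to $0$ with $r_n\leq 1/10$, and $(m_n)_{n\geq1}$ a sequence of positive integers. Define $\delta_0=1/2$, $\delta_{n+1}=\frac{\delta_n^2 r_{n+1}}{4m_{n+1}^2}$ and $\varepsilon_{n+1}=\frac{\delta_n^2}{2m_{n+1}^2}$. Put $\Sigma_{n+1}=\overline{D}\big(0,\delta_n(1-\frac1{m_{n+1}})\big)\cap\frac{3\delta_n}{m_{n+1}}\mathbb{Z}^2$ (a finite set). Let $\mathcal S_0=\{0\}$, $P_{0,0}(z,w)=w$, and inductively $\mathcal S_{n+1}=\mathcal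 S_n\times\Sigma_{n+1}$ and, for $s'=(s,\sigma)\in\mathcal S_{n+1}$, $P_{n+1,s'}=(P_{n,s}-\sigma)^2-\varepsilon_{n+1}A_{n+1}$. Set (all sets taken in $D(0,1/2)\times\mathbb{D}$) $X_{n,s}=\{|P_{n,s}|<\delta_n\}$, $X_n=\bigcup_{s\in\mathcal S_n}X_{n,s}$, and $X^{\mathrm{int}}_{n+1,s,\sigma}=\{|P_{n,s}-\sigma|<\delta_n/m_{n+1}\}$ for $s\in\mathcal S_n,\sigma\in\Sigma_{n+1}$. *)

theory Defs
  imports "HOL-Analysis.Analysis"
begin

definition poly2 :: "(complex \<times> complex \<Rightarrow> complex) \<Rightarrow> bool" where
  "poly2 f \<longleftrightarrow> (\<exists>N::nat. \<exists>c::nat \<Rightarrow> nat \<Rightarrow> complex.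
      \<forall>z w. f (z, w) = (\<Sum>i\<le>N. \<Sum>j\<le>N. c i j * z ^ i * w ^ j))"

definition poly_hull :: "(complex \<times> complex) set \<Rightarrow> (complex \<times> complex) set" where
  "poly_hull K = (if K = {} then {} else
     {p. \<forall>f. poly2 f \<longrightarrow> norm (f p) \<le> (SUP q\<in>K. norm (f q))})"

definition poly_convex :: "(complex \<times> complex) set \<Rightarrow> bool" where
  "poly_convex X \<longleftrightarrow> (\<forall>K. compact K \<and> K \<subseteq> X \<longrightarrow> poly_hull K \<subseteq> X)"

definition Bidisk :: "(complex \<times> complex) set" where
  "Bidisk = {(z, w). norm z < 1/2 \<and> norm w < 1}"

definition horizontal :: "(complex \<times> complex) set \<Rightarrow> bool" where
  "horizontal Y \<longleftrightarrow> Y \<subseteq> Bidisk \<and>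
     (\<exists>e>0. Y \<subseteq> {(z, w). norm z < 1/2 \<and> norm w < 1 - e})"

definition contains_holo_disk :: "(complex \<times> complex) set \<Rightarrow> bool" where
  "contains_holo_disk Y \<longleftrightarrow> (\<exists>f g. f holomorphic_on ball 0 1 \<and> g holomorphic_on ball 0 1 \<and>
     (\<forall>t\<in>ball 0 1. (f t, g t) \<in> Y) \<and>
     (\<exists>t1\<in>ball 0 1. \<exists>t2\<in>ball 0 1. (f t1, g t1) \<noteq> (f t2, g t2)))"

definition Afun :: "(nat \<Rightarrow> complex) \<Rightarrow> nat \<Rightarrow> complex \<times> complex \<Rightarrow> complex" where
  "Afun a n p = (if odd n then fst p - a n else fst p + snd p / 100 - a n)"

fun delta :: "(nat \<Rightarrow> real) \<Rightarrow> (nat \<Rightarrow> nat) \<Rightarrow> nat \<Rightarrow> real" where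
  "delta r m 0 = 1/2"
| "delta r m (Suc n) = (delta r m n)^2 * r (Suc n) / (4 * (real (m (Suc n)))^2)"

definition eps :: "(nat \<Rightarrow> real) \<Rightarrow> (nat \<Rightarrow> nat) \<Rightarrow> nat \<Rightarrow> real" where
  "eps r m n = (delta r m (n - 1))^2 / (2 * (real (m n))^2)"
  \<comment> \<open>only used for n \<ge> 1: eps (n+1) = delta n ^2 / (2 m(n+1)^2)\<close>

text \<open>Sigma_{n} for n \<ge> 1 (the paper's Sigma_{n+1} is Sigma r m (n+1)).\<close>
definition Sigma_set :: "(nat \<Rightarrow> real) \<Rightarrow> (nat \<Rightarrow> nat) \<Rightarrow> nat \<Rightarrow> complex set" where
  "Sigma_set r m n = {\<sigma>. norm \<sigma> \<le> delta r m (n - 1) * (1 - 1 / real (m n)) \<and>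
      (\<exists>k l :: int. \<sigma> = complex_of_real (3 * delta r m (n - 1) / real (m n)) * Complex (of_int k) (of_int l))}"

text \<open>An element s of S_n is encoded as a function with s k \<in> Sigma_k for 1 \<le> k \<le> n
  (values outside {1..n} are irrelevant).\<close>
definition S_set :: "(nat \<Rightarrow> real) \<Rightarrow> (nat \<Rightarrow> nat) \<Rightarrow> nat \<Rightarrow> (nat \<Rightarrow> complex) set" where
  "S_set r m n = {s. \<forall>k\<in>{1..n}. s k \<in> Sigma_set r m k}"

fun Ppoly :: "(nat \<Rightarrow> complex) \<Rightarrow> (nat \<Rightarrow> real) \<Rightarrow> (nat \<Rightarrow> nat) \<Rightarrow> nat \<Rightarrow> (nat \<Rightarrow> complex)
    \<Rightarrow> complex \<times> complex \<Rightarrow> complex" where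
  "Ppoly a r m 0 s p = snd p"
| "Ppoly a r m (Suc n) s p =
     (Ppoly a r m n s p - s (Suc n))^2 - complex_of_real (eps r m (Suc n)) * Afun a (Suc n) p"

definition Xns :: "(nat \<Rightarrow> complex) \<Rightarrow> (nat \<Rightarrow> real) \<Rightarrow> (nat \<Rightarrow> nat) \<Rightarrow> nat \<Rightarrow> (nat \<Rightarrow> complex)
    \<Rightarrow> (complex \<times> complex) set" where
  "Xns a r m n s = {p \<in> Bidisk. norm (Ppoly a r m n s p) < delta r m n}"

definition Xn :: "(nat \<Rightarrow> complex) \<Rightarrow> (nat \<Rightarrow> real) \<Rightarrow> (nat \<Rightarrow> nat) \<Rightarrow> nat
    \<Rightarrow> (complex \<times> complex) set" where
  "Xn a r m n = (\<Union>s\<in>S_set r m n. Xns a r m n s)"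

definition Xlim :: "(nat \<Rightarrow> complex) \<Rightarrow> (nat \<Rightarrow> real) \<Rightarrow> (nat \<Rightarrow> nat) \<Rightarrow> (complex \<times> complex) set" where
  "Xlim a r m = (\<Inter>n. Xn a r m n)"

end

theory Submission
  imports Defs
begin

locale cons =
  fixes a :: "nat \<Rightarrow> complex" and r :: "nat \<Rightarrow> real" and m :: "nat \<Rightarrow> nat"
  assumes a_in: "\<And>n. n \<ge> 1 \<Longrightarrow> a n \<in> ball 0 (1/4)"
    and r_pos: "\<And>n. n \<ge> 1 \<Longrightarrow> r n > 0"
    and r_le: "\<And>n. n \<ge> 1 \<Longrightarrow> r n \<le> 1/10"
    and m_pos: "\<And>n. n \<ge> 1 \<Longrightarrow> m n > 0"
begin

abbreviation "\<delta> \<equiv> delta r m"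
abbreviation "\<epsilon> \<equiv> eps r m"
abbreviation "P \<equiv> Ppoly a r m"

lemma mS: "real (m (Suc n)) \<ge> 1"
  using m_pos[of "Suc n"] by simp

lemma delta_pos: "\<delta> n > 0"
proof (induction n)
  case 0 then show ?case by simp
next
  case (Suc n)
  have "r (Suc n) > 0" using r_pos by simp
  moreover have "real (m (Suc n)) > 0" using mS[of n] by simp
  ultimately show ?case using Suc by simp
qed

lemma eps_Suc: "\<epsilon> (Suc n) = (\<delta> n)^2 / (2*(real (m (Suc n)))^2)"
  by (simp add: eps_def)

lemma eps_pos: "\<epsilon> (Suc n) > 0"
  using delta_pos[of n] mS[of n] by (simp add: eps_Suc)

lemma delta_Suc_eps: "\<delta> (Suc n) = \<epsilon> (Suc n) * r (Suc n) / 2"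
  by (simp add: eps_Suc field_simps power2_eq_square)

lemma eps_delta: "2 * \<epsilon> (Suc n) = (\<delta> n / real (m (Suc n)))^2"
  using mS[of n] by (simp add: eps_Suc field_simps power2_eq_square)

lemma A_bound:
  assumes "p \<in> Bidisk" "n \<ge> 1"
  shows "cmod (Afun a n p) < 76/100"
proof -
  obtain z w where p: "p = (z, w)" by (cases p)
  have z: "cmod z < 1/2" and w: "cmod w < 1" using assms(1) p by (auto simp: Bidisk_def)
  have an: "cmod (a n) < 1/4" using a_in[OF assms(2)] by simp
  have "cmod (z - a n) \<le> cmod z + cmod (a n)" by (rule norm_triangle_ineq4)
  moreover have "cmod (z + w/100 - a n) \<le> cmod z + cmod w / 100 + cmod (a n)"
  proof -
    have "cmod (z + w/100 - a n) \<le> cmod (z + w/100) + cmod (a n)" by (rule norm_triangle_ineq4)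
    moreover have "cmod (z + w/100) \<le> cmod z + cmod (w/100)" by (rule norm_triangle_ineq)
    ultimately show ?thesis by simp
  qed
  ultimately show ?thesis using z w an by (auto simp: Afun_def p)
qed

lemma sigma_bound:
  "\<sigma> \<in> Sigma_set r m (Suc n) \<Longrightarrow> cmod \<sigma> \<le> \<delta> n * (1 - 1/real (m (Suc n)))"
  by (simp add: Sigma_set_def)

lemma step_bound:
  assumes "p \<in> Bidisk" "cmod (P (Suc n) s p) < \<delta> (Suc n)"
  shows "cmod (P n s p - s (Suc n)) < \<delta> n / real (m (Suc n))"
proof -
  define v where "v = P n s p - s (Suc n)"
  have e: "v^2 = P (Suc n) s p + complex_of_real (\<epsilon> (Suc n)) * Afun a (Suc n) p"
    by (simp add: v_def)
  have ep: "\<epsilon> (Suc n) > 0" by (rule eps_pos)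
  have A: "cmod (Afun a (Suc n) p) < 76/100" using A_bound[OF assms(1)] by simp
  have "cmod (v^2) \<le> cmod (P (Suc n) s p) + \<epsilon> (Suc n) * cmod (Afun a (Suc n) p)"
    unfolding e using ep norm_triangle_ineq[of "P (Suc n) s p" "complex_of_real (\<epsilon> (Suc n)) * Afun a (Suc n) p"]
    by (simp add: norm_mult)
  also have "\<dots> < \<epsilon> (Suc n) * r (Suc n) / 2 + \<epsilon> (Suc n) * (76/100)"
  proof -
    have "cmod (P (Suc n) s p) < \<epsilon> (Suc n) * r (Suc n) / 2"
      using assms(2) delta_Suc_eps[of n] by linarith
    moreover have "\<epsilon> (Suc n) * cmod (Afun a (Suc n) p) \<le> \<epsilon> (Suc n) * (76/100)"
      using A ep by (intro mult_left_mono) auto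
    ultimately show ?thesis by linarith
  qed
  also have "\<dots> \<le> \<epsilon> (Suc n) * (1/20) + \<epsilon> (Suc n) * (76/100)"
    using r_le[of "Suc n"] ep by simp
  also have "\<dots> < 2 * \<epsilon> (Suc n)" using ep by simp
  also have "\<dots> = (\<delta> n / real (m (Suc n)))^2" by (rule eps_delta)
  finally have "(cmod v)^2 < (\<delta> n / real (m (Suc n)))^2" by (simp add: norm_power)
  then show ?thesis unfolding v_def[symmetric]
    using delta_pos[of n] mS[of n] by (meson divide_nonneg_nonneg less_imp_le of_nat_0_le_iff power_less_imp_less_base)
qed

lemma S_set_Suc: "s \<in> S_set r m (Suc n) \<Longrightarrow> s \<in> S_set r m n \<and> s (Suc n) \<in> Sigma_set r m (Suc n)"
  by (auto simp: S_set_def)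

lemma Xns_mono:
  assumes "s \<in> S_set r m (Suc n)"
  shows "Xns a r m (Suc n) s \<subseteq> Xns a r m n s"
proof
  fix p assume p: "p \<in> Xns a r m (Suc n) s"
  then have pb: "p \<in> Bidisk" and pp: "cmod (P (Suc n) s p) < \<delta> (Suc n)" by (auto simp: Xns_def)
  have 1: "cmod (P n s p - s (Suc n)) < \<delta> n / real (m (Suc n))" by (rule step_bound[OF pb pp])
  have 2: "cmod (s (Suc n)) \<le> \<delta> n * (1 - 1/real (m (Suc n)))"
    using S_set_Suc[OF assms] sigma_bound by blast
  have "cmod (P n s p) \<le> cmod (P n s p - s (Suc n)) + cmod (s (Suc n))"
    by (metis diff_add_cancel norm_triangle_ineq)
  also have "\<dots> < \<delta> n / real (m (Suc n)) + \<delta> n * (1 - 1/real (m (Suc n)))"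
    using 1 2 by simp
  also have "\<dots> = \<delta> n" by (simp add: field_simps)
  finally show "p \<in> Xns a r m n s" using pb by (simp add: Xns_def)
qed

lemma Xn_mono_Suc: "Xn a r m (Suc n) \<subseteq> Xn a r m n"
  unfolding Xn_def using Xns_mono S_set_Suc by blast

lemma Xn_mono: "k \<le> n \<Longrightarrow> Xn a r m n \<subseteq> Xn a r m k"
  by (induction n rule: dec_induct) (use Xn_mono_Suc in auto)

lemma Ppoly_cong: "(\<forall>k\<in>{1..n}. s k = s' k) \<Longrightarrow> P n s = P n s'"
proof (induction n)
  case 0 show ?case by (rule ext) simp
next
  case (Suc n)
  then have "P n s = P n s'" by auto
  moreover have "s (Suc n) = s' (Suc n)" using Suc.prems by auto
  ultimately show ?case by (intro ext) simp
qed

lemma Xns_cong: "(\<forall>k\<in>{1..n}. s k = s' k) \<Longrightarrow> Xns a r m n s = Xns a r m n s'"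
  unfolding Xns_def using Ppoly_cong by metis

end

definition lattice :: "real \<Rightarrow> complex set" where
  "lattice c = {\<zeta>. \<exists>k l :: int. \<zeta> = complex_of_real c * Complex (of_int k) (of_int l)}"

lemma int_sq_ge1: "(k::int) \<noteq> 0 \<Longrightarrow> (of_int k :: real)^2 \<ge> 1"
proof -
  assume "k \<noteq> 0"
  then have "\<bar>of_int k :: real\<bar> \<ge> 1" by linarith
  then show ?thesis
    by (metis abs_ge_self abs_of_nonneg one_le_power power2_abs zero_le_one order_trans)
qed

lemma lattice_sep:
  assumes "c > 0" "x \<in> lattice c" "y \<in> lattice c" "x \<noteq> y"
  shows "cmod (x - y) \<ge> c"
proof -
  obtain k l where x: "x = complex_of_real c * Complex (of_int k) (of_int l)"
    using assms(2) by (auto simp: lattice_def)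
  obtain k' l' where y: "y = complex_of_real c * Complex (of_int k') (of_int l')"
    using assms(3) by (auto simp: lattice_def)
  have d: "x - y = complex_of_real c * Complex (of_int (k - k')) (of_int (l - l'))"
    by (simp add: x y complex_eq_iff algebra_simps)
  have ne: "k - k' \<noteq> 0 \<or> l - l' \<noteq> 0" using assms(4) x y by auto
  have "1 \<le> (of_int (k-k') :: real)^2 + (of_int (l-l'))^2"
    using ne int_sq_ge1 by (metis add_increasing add_increasing2 zero_le_power2)
  then have "1 \<le> cmod (Complex (of_int (k - k')) (of_int (l - l')))"
    by (simp add: cmod_def)
  then show ?thesis using assms(1) by (simp add: d norm_mult)
qed

context cons begin

lemma Sigma_lattice: "\<sigma> \<in> Sigma_set r m (Suc n) \<Longrightarrow> \<sigma> \<in> lattice (3 * \<delta> n / real (m (Suc n)))"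
  by (auto simp: Sigma_set_def lattice_def)

lemma Sigma_sep:
  assumes "\<sigma> \<in> Sigma_set r m (Suc n)" "\<sigma>' \<in> Sigma_set r m (Suc n)" "\<sigma> \<noteq> \<sigma>'"
  shows "cmod (\<sigma> - \<sigma>') \<ge> 3 * \<delta> n / real (m (Suc n))"
  using lattice_sep[OF _ Sigma_lattice[OF assms(1)] Sigma_lattice[OF assms(2)] assms(3)]
    delta_pos[of n] mS[of n] by simp

lemma Xns_disj:
  "s \<in> S_set r m n \<Longrightarrow> s' \<in> S_set r m n \<Longrightarrow> p \<in> Xns a r m n s \<Longrightarrow> p \<in> Xns a r m n s'
    \<Longrightarrow> \<forall>k\<in>{1..n}. s k = s' k"
proof (induction n)
  case 0 then show ?case by simp
next
  case (Suc n)
  have s: "s \<in> S_set r m n" "s (Suc n) \<in> Sigma_set r m (Suc n)" using S_set_Suc[OF Suc.prems(1)] by auto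
  have s': "s' \<in> S_set r m n" "s' (Suc n) \<in> Sigma_set r m (Suc n)" using S_set_Suc[OF Suc.prems(2)] by auto
  have p1: "p \<in> Xns a r m n s" using Xns_mono[OF Suc.prems(1)] Suc.prems(3) by blast
  have p2: "p \<in> Xns a r m n s'" using Xns_mono[OF Suc.prems(2)] Suc.prems(4) by blast
  have IH: "\<forall>k\<in>{1..n}. s k = s' k" using Suc.IH[OF s(1) s'(1) p1 p2] .
  have eq: "P n s p = P n s' p" using Ppoly_cong[OF IH] by simp
  have pb: "p \<in> Bidisk" using Suc.prems(3) by (simp add: Xns_def)
  have b1: "cmod (P n s p - s (Suc n)) < \<delta> n / real (m (Suc n))"
    using step_bound[OF pb] Suc.prems(3) by (simp add: Xns_def)
  have b2: "cmod (P n s p - s' (Suc n)) < \<delta> n / real (m (Suc n))"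
    using step_bound[OF pb] Suc.prems(4) eq by (simp add: Xns_def)
  have "cmod (s (Suc n) - s' (Suc n)) \<le> cmod (P n s p - s (Suc n)) + cmod (P n s p - s' (Suc n))"
    using dist_triangle2[of "s (Suc n)" "s' (Suc n)" "P n s p"] by (simp add: dist_norm norm_minus_commute)
  also have "\<dots> < 2 * (\<delta> n / real (m (Suc n)))" using b1 b2 by simp
  also have "\<dots> < 3 * \<delta> n / real (m (Suc n))" using delta_pos[of n] mS[of n] by (simp add: field_simps)
  finally have "s (Suc n) = s' (Suc n)" using Sigma_sep[OF s(2) s'(2)] by fastforce
  then show ?case using IH by (auto simp: le_Suc_eq)
qed

end

inductive pf :: "(complex \<times> complex \<Rightarrow> complex) \<Rightarrow> bool" where
  pf_const: "pf (\<lambda>p. c)"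
| pf_fst: "pf fst"
| pf_snd: "pf snd"
| pf_add: "pf f \<Longrightarrow> pf g \<Longrightarrow> pf (\<lambda>p. f p + g p)"
| pf_mult: "pf f \<Longrightarrow> pf g \<Longrightarrow> pf (\<lambda>p. f p * g p)"

inductive upf :: "(complex \<Rightarrow> complex) \<Rightarrow> bool" where
  upf_const: "upf (\<lambda>z. c)"
| upf_id: "upf (\<lambda>z. z)"
| upf_add: "upf f \<Longrightarrow> upf g \<Longrightarrow> upf (\<lambda>z. f z + g z)"
| upf_mult: "upf f \<Longrightarrow> upf g \<Longrightarrow> upf (\<lambda>z. f z * g z)"

lemma upf_comp: "upf q \<Longrightarrow> pf F \<Longrightarrow> pf (\<lambda>p. q (F p))"
  by (induction rule: upf.induct) (auto intro: pf.intros)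

lemma pf_diff: "pf f \<Longrightarrow> pf g \<Longrightarrow> pf (\<lambda>p. f p - g p)"
proof -
  assume "pf f" "pf g"
  then have "pf (\<lambda>p. f p + (-1) * g p)" by (intro pf.intros)
  then show ?thesis by simp
qed

lemma pf_power: "pf f \<Longrightarrow> pf (\<lambda>p. f p ^ n)"
  by (induction n) (auto intro: pf.intros)

lemma upf_diff: "upf f \<Longrightarrow> upf g \<Longrightarrow> upf (\<lambda>p. f p - g p)"
proof -
  assume "upf f" "upf g"
  then have "upf (\<lambda>p. f p + (-1) * g p)" by (intro upf.intros)
  then show ?thesis by simp
qed

lemma upf_power: "upf f \<Longrightarrow> upf (\<lambda>p. f p ^ n)"
  by (induction n) (auto intro: upf.intros)

lemma upf_sum: assumes "\<And>k. k < (n::nat) \<Longrightarrow> upf (f k)" shows "upf (\<lambda>z. \<Sum>k<n. f k z)"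
  using assms
proof (induction n)
  case 0
  show ?case using upf_const[of 0] by simp
next
  case (Suc n)
  then have "upf (\<lambda>z. (\<Sum>k<n. f k z) + f n z)" by (intro upf_add) auto
  then show ?case by simp
qed

lemma upf_cont: "upf q \<Longrightarrow> continuous_on S q"
  by (induction rule: upf.induct) (auto intro!: continuous_intros)

lemma pf_cont: "pf q \<Longrightarrow> continuous_on S q"
  by (induction rule: pf.induct) (auto intro!: continuous_intros)

definition polyS :: "(complex \<times> complex \<Rightarrow> complex) \<Rightarrow> bool" where
  "polyS f \<longleftrightarrow> (\<exists>S c. finite S \<and> (\<forall>z w. f (z, w) = (\<Sum>x\<in>S. c x * z ^ fst x * w ^ snd x)))"

lemma polyS_poly2: assumes "polyS f" shows "poly2 f"
proof -
  obtain S c where S: "finite S" and f: "\<And>z w. f (z, w) = (\<Sum>x\<in>S. c x * z ^ fst x * w ^ snd x)"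
    using assms by (auto simp: polyS_def)
  define N where "N = Max (insert 0 (fst ` S \<union> snd ` S))"
  have sub: "S \<subseteq> {..N} \<times> {..N}"
  proof
    fix x assume "x \<in> S"
    then have "fst x \<le> N" "snd x \<le> N" unfolding N_def using S by (auto intro!: Max_ge)
    then show "x \<in> {..N} \<times> {..N}" by (cases x) auto
  qed
  define c' where "c' i j = (if (i, j) \<in> S then c (i, j) else 0)" for i j
  have "\<forall>z w. f (z, w) = (\<Sum>i\<le>N. \<Sum>j\<le>N. c' i j * z ^ i * w ^ j)"
  proof (intro allI)
    fix z w
    have "(\<Sum>i\<le>N. \<Sum>j\<le>N. c' i j * z ^ i * w ^ j) = (\<Sum>x\<in>{..N} \<times> {..N}. c' (fst x) (snd x) * z ^ fst x * w ^ snd x)"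
      by (simp add: sum.cartesian_product case_prod_beta)
    also have "\<dots> = (\<Sum>x\<in>S. c' (fst x) (snd x) * z ^ fst x * w ^ snd x)"
      by (rule sum.mono_neutral_right) (use sub in \<open>auto simp: c'_def\<close>)
    also have "\<dots> = (\<Sum>x\<in>S. c x * z ^ fst x * w ^ snd x)"
      by (rule sum.cong) (auto simp: c'_def)
    finally show "f (z, w) = (\<Sum>i\<le>N. \<Sum>j\<le>N. c' i j * z ^ i * w ^ j)" using f by simp
  qed
  then show ?thesis unfolding poly2_def by blast
qed

lemma polyS_const: "polyS (\<lambda>p. k)"
  unfolding polyS_def by (rule exI[of _ "{(0,0)}"], rule exI[of _ "\<lambda>x. k"]) simp

lemma polyS_fst: "polyS fst"
  unfolding polyS_def by (rule exI[of _ "{(1,0)}"], rule exI[of _ "\<lambda>x. 1"]) simp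

lemma polyS_snd: "polyS snd"
  unfolding polyS_def by (rule exI[of _ "{(0,1)}"], rule exI[of _ "\<lambda>x. 1"]) simp

lemma polyS_add: assumes "polyS f" "polyS g" shows "polyS (\<lambda>p. f p + g p)"
proof -
  obtain S c where S: "finite S" and f: "\<And>z w. f (z, w) = (\<Sum>x\<in>S. c x * z ^ fst x * w ^ snd x)"
    using assms(1) by (auto simp: polyS_def)
  obtain T d where T: "finite T" and g: "\<And>z w. g (z, w) = (\<Sum>x\<in>T. d x * z ^ fst x * w ^ snd x)"
    using assms(2) by (auto simp: polyS_def)
  define e where "e x = (if x \<in> S then c x else 0) + (if x \<in> T then d x else 0)" for x
  have "f (z, w) + g (z, w) = (\<Sum>x\<in>S \<union> T. e x * z ^ fst x * w ^ snd x)" for z w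
  proof -
    have 1: "(\<Sum>x\<in>S. c x * z ^ fst x * w ^ snd x) = (\<Sum>x\<in>S \<union> T. (if x \<in> S then c x else 0) * z ^ fst x * w ^ snd x)"
      by (rule sum.mono_neutral_cong_left) (use S T in auto)
    have 2: "(\<Sum>x\<in>T. d x * z ^ fst x * w ^ snd x) = (\<Sum>x\<in>S \<union> T. (if x \<in> T then d x else 0) * z ^ fst x * w ^ snd x)"
      by (rule sum.mono_neutral_cong_left) (use S T in auto)
    show ?thesis unfolding f g 1 2 by (simp add: e_def sum.distrib[symmetric] algebra_simps)
  qed
  then show ?thesis unfolding polyS_def using S T by (intro exI[of _ "S \<union> T"] exI[of _ e]) auto
qed

lemma polyS_mult: assumes "polyS f" "polyS g" shows "polyS (\<lambda>p. f p * g p)"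
proof -
  obtain S c where S: "finite S" and f: "\<And>z w. f (z, w) = (\<Sum>x\<in>S. c x * z ^ fst x * w ^ snd x)"
    using assms(1) by (auto simp: polyS_def)
  obtain T d where T: "finite T" and g: "\<And>z w. g (z, w) = (\<Sum>x\<in>T. d x * z ^ fst x * w ^ snd x)"
    using assms(2) by (auto simp: polyS_def)
  define \<phi> :: "(nat \<times> nat) \<times> (nat \<times> nat) \<Rightarrow> nat \<times> nat" where
    "\<phi> q = (fst (fst q) + fst (snd q), snd (fst q) + snd (snd q))" for q
  define ee where "ee q = c (fst q) * d (snd q)" for q
  define e where "e y = (\<Sum>q\<in>{q \<in> S \<times> T. \<phi> q = y}. ee q)" for y
  have fin: "finite (S \<times> T)" using S T by simp
  have "f (z, w) * g (z, w) = (\<Sum>y\<in>\<phi> ` (S \<times> T). e y * z ^ fst y * w ^ snd y)" for z w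
  proof -
    have "f (z, w) * g (z, w) = (\<Sum>x\<in>S. \<Sum>y\<in>T. (c x * z ^ fst x * w ^ snd x) * (d y * z ^ fst y * w ^ snd y))"
      unfolding f g by (simp add: sum_product)
    also have "\<dots> = (\<Sum>q\<in>S \<times> T. ee q * z ^ fst (\<phi> q) * w ^ snd (\<phi> q))"
      by (simp add: sum.cartesian_product ee_def \<phi>_def power_add algebra_simps case_prod_beta)
    also have "\<dots> = (\<Sum>y\<in>\<phi> ` (S \<times> T). \<Sum>q\<in>{q \<in> S \<times> T. \<phi> q = y}. ee q * z ^ fst (\<phi> q) * w ^ snd (\<phi> q))"
      by (rule sum.image_gen[OF fin])
    also have "\<dots> = (\<Sum>y\<in>\<phi> ` (S \<times> T). e y * z ^ fst y * w ^ snd y)"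
    proof (rule sum.cong[OF refl])
      fix y assume "y \<in> \<phi> ` (S \<times> T)"
      have "(\<Sum>q\<in>{q \<in> S \<times> T. \<phi> q = y}. ee q * z ^ fst (\<phi> q) * w ^ snd (\<phi> q))
          = (\<Sum>q\<in>{q \<in> S \<times> T. \<phi> q = y}. ee q * z ^ fst y * w ^ snd y)"
        by (rule sum.cong) auto
      also have "\<dots> = e y * z ^ fst y * w ^ snd y"
        by (simp add: e_def sum_distrib_right)
      finally show "(\<Sum>q\<in>{q \<in> S \<times> T. \<phi> q = y}. ee q * z ^ fst (\<phi> q) * w ^ snd (\<phi> q)) = e y * z ^ fst y * w ^ snd y" .
    qed
    finally show ?thesis .
  qed
  then show ?thesis unfolding polyS_def using fin by (intro exI[of _ "\<phi> ` (S \<times> T)"] exI[of _ e]) auto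
qed

lemma pf_polyS: "pf f \<Longrightarrow> polyS f"
  by (induction rule: pf.induct) (auto intro: polyS_const polyS_fst polyS_snd polyS_add polyS_mult)

lemma pf_poly2: "pf f \<Longrightarrow> poly2 f"
  using pf_polyS polyS_poly2 by blast

context cons begin

lemma pf_Afun: "pf (Afun a n)"
proof -
  have "pf (\<lambda>p. fst p - a n)" by (intro pf_diff pf.intros)
  moreover have "pf (\<lambda>p. fst p + (1/100) * snd p - a n)" by (intro pf_diff pf.intros)
  ultimately show ?thesis unfolding Afun_def[abs_def] by (cases "odd n") auto
qed

lemma pf_P: "pf (P n s)"
proof (induction n)
  case 0
  have "pf snd" by (rule pf_snd)
  then show ?case by (simp add: case_prod_beta)
next
  case (Suc n)
  have "pf (\<lambda>p. (P n s p - s (Suc n))^2 - complex_of_real (\<epsilon> (Suc n)) * Afun a (Suc n) p)"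
    by (intro pf_diff pf_power pf_mult Suc pf.intros pf_Afun)
  then show ?case by simp
qed

lemma cont_P: "continuous_on S (P n s)"
  using pf_cont pf_P by blast

end

definition approx :: "complex set \<Rightarrow> (complex \<Rightarrow> complex) \<Rightarrow> bool" where
  "approx L F \<longleftrightarrow> (\<forall>\<eta>>0. \<exists>q. upf q \<and> (\<forall>\<zeta>\<in>L. cmod (F \<zeta> - q \<zeta>) \<le> \<eta>))"

lemma upf_bounded:
  assumes "bounded L" "upf q"
  shows "\<exists>B. \<forall>\<zeta>\<in>L. cmod (q \<zeta>) \<le> B"
proof -
  have "compact (closure L)" using assms(1) by (simp add: compact_closure)
  then have "compact (q ` closure L)" by (rule compact_continuous_image[OF upf_cont[OF assms(2)]])
  then have "bounded (q ` closure L)" by (rule compact_imp_bounded)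
  then obtain B where "\<forall>x\<in>q ` closure L. norm x \<le> B" by (auto simp: bounded_iff)
  then show ?thesis using closure_subset by fastforce
qed

lemma approx_upf: "upf q \<Longrightarrow> approx L q"
  unfolding approx_def by (intro allI impI exI[of _ q]) auto

lemma approx_bounded:
  assumes "bounded L" "approx L F"
  shows "\<exists>B\<ge>0. \<forall>\<zeta>\<in>L. cmod (F \<zeta>) \<le> B"
proof -
  obtain q where q: "upf q" "\<forall>\<zeta>\<in>L. cmod (F \<zeta> - q \<zeta>) \<le> 1"
    using assms(2) unfolding approx_def by (meson zero_less_one)
  obtain B where B: "\<forall>\<zeta>\<in>L. cmod (q \<zeta>) \<le> B" using upf_bounded[OF assms(1) q(1)] by blast
  have "\<forall>\<zeta>\<in>L. cmod (F \<zeta>) \<le> \<bar>B\<bar> + 1"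
  proof
    fix \<zeta> assume z: "\<zeta> \<in> L"
    have "cmod (F \<zeta>) \<le> cmod (F \<zeta> - q \<zeta>) + cmod (q \<zeta>)" by (metis diff_add_cancel norm_triangle_ineq)
    then show "cmod (F \<zeta>) \<le> \<bar>B\<bar> + 1" using q(2) B z by fastforce
  qed
  then show ?thesis by (intro exI[of _ "\<bar>B\<bar> + 1"]) auto
qed

lemma approx_add:
  assumes "approx L F" "approx L G"
  shows "approx L (\<lambda>\<zeta>. F \<zeta> + G \<zeta>)"
  unfolding approx_def
proof (intro allI impI)
  fix \<eta> :: real assume "\<eta> > 0"
  then obtain q where q: "upf q" "\<forall>\<zeta>\<in>L. cmod (F \<zeta> - q \<zeta>) \<le> \<eta>/2"
    using assms(1) unfolding approx_def by (meson half_gt_zero)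
  obtain q' where q': "upf q'" "\<forall>\<zeta>\<in>L. cmod (G \<zeta> - q' \<zeta>) \<le> \<eta>/2"
    using assms(2) \<open>\<eta> > 0\<close> unfolding approx_def by (meson half_gt_zero)
  have "\<forall>\<zeta>\<in>L. cmod (F \<zeta> + G \<zeta> - (q \<zeta> + q' \<zeta>)) \<le> \<eta>"
  proof
    fix \<zeta> assume z: "\<zeta> \<in> L"
    have "cmod (F \<zeta> + G \<zeta> - (q \<zeta> + q' \<zeta>)) \<le> cmod (F \<zeta> - q \<zeta>) + cmod (G \<zeta> - q' \<zeta>)"
      by (metis add_diff_add norm_triangle_ineq)
    then show "cmod (F \<zeta> + G \<zeta> - (q \<zeta> + q' \<zeta>)) \<le> \<eta>" using q(2) q'(2) z by fastforce
  qed
  then show "\<exists>q. upf q \<and> (\<forall>\<zeta>\<in>L. cmod (F \<zeta> + G \<zeta> - q \<zeta>) \<le> \<eta>)"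
    using q(1) q'(1) by (intro exI[of _ "\<lambda>\<zeta>. q \<zeta> + q' \<zeta>"]) (auto intro: upf_add)
qed

lemma approx_mult:
  assumes L: "bounded L" and F: "approx L F" and G: "approx L G"
  shows "approx L (\<lambda>\<zeta>. F \<zeta> * G \<zeta>)"
  unfolding approx_def
proof (intro allI impI)
  fix \<eta> :: real assume eta: "\<eta> > 0"
  obtain BF where BF: "BF \<ge> 0" "\<forall>\<zeta>\<in>L. cmod (F \<zeta>) \<le> BF" using approx_bounded[OF L F] by blast
  obtain BG where BG: "BG \<ge> 0" "\<forall>\<zeta>\<in>L. cmod (G \<zeta>) \<le> BG" using approx_bounded[OF L G] by blast
  define e1 where "e1 = min 1 (\<eta> / (2 * (BF + 1)))"
  define e2 where "e2 = \<eta> / (2 * (BG + 2))"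
  have e1: "e1 > 0" using eta BF by (simp add: e1_def)
  have e2: "e2 > 0" using eta BG by (simp add: e2_def)
  obtain r where r: "upf r" "\<forall>\<zeta>\<in>L. cmod (G \<zeta> - r \<zeta>) \<le> e1"
    using G e1 unfolding approx_def by blast
  obtain q where q: "upf q" "\<forall>\<zeta>\<in>L. cmod (F \<zeta> - q \<zeta>) \<le> e2"
    using F e2 unfolding approx_def by blast
  have "\<forall>\<zeta>\<in>L. cmod (F \<zeta> * G \<zeta> - q \<zeta> * r \<zeta>) \<le> \<eta>"
  proof
    fix \<zeta> assume z: "\<zeta> \<in> L"
    have rb: "cmod (r \<zeta>) \<le> BG + 1"
    proof -
      have "cmod (r \<zeta>) \<le> cmod (G \<zeta>) + cmod (G \<zeta> - r \<zeta>)"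
        by (metis add.commute diff_add_cancel norm_minus_commute norm_triangle_ineq)
      then show ?thesis using BG r(2) z e1_def by fastforce
    qed
    have "F \<zeta> * G \<zeta> - q \<zeta> * r \<zeta> = F \<zeta> * (G \<zeta> - r \<zeta>) + r \<zeta> * (F \<zeta> - q \<zeta>)"
      by (simp add: algebra_simps)
    then have "cmod (F \<zeta> * G \<zeta> - q \<zeta> * r \<zeta>) \<le> cmod (F \<zeta>) * cmod (G \<zeta> - r \<zeta>) + cmod (r \<zeta>) * cmod (F \<zeta> - q \<zeta>)"
      by (metis norm_mult norm_triangle_ineq)
    also have "\<dots> \<le> BF * e1 + (BG + 1) * e2"
      using BF BG r(2) q(2) z rb by (intro add_mono mult_mono) auto
    also have "BF * e1 \<le> \<eta> / 2"
    proof -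
      have "BF * e1 \<le> BF * (\<eta> / (2 * (BF + 1)))" using BF(1) by (intro mult_left_mono) (auto simp: e1_def)
      also have "\<dots> \<le> \<eta> / 2" using BF(1) eta by (simp add: field_simps)
      finally show ?thesis .
    qed
    also have "(BG + 1) * e2 \<le> \<eta> / 2" using BG(1) eta by (simp add: e2_def field_simps)
    finally show "cmod (F \<zeta> * G \<zeta> - q \<zeta> * r \<zeta>) \<le> \<eta>" by simp
  qed
  then show "\<exists>q. upf q \<and> (\<forall>\<zeta>\<in>L. cmod (F \<zeta> * G \<zeta> - q \<zeta>) \<le> \<eta>)"
    using q(1) r(1) by (intro exI[of _ "\<lambda>\<zeta>. q \<zeta> * r \<zeta>"]) (auto intro: upf_mult)
qed

lemma approx_const: "approx L (\<lambda>\<zeta>. c)"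
  by (rule approx_upf) (rule upf_const)

lemma approx_power: "bounded L \<Longrightarrow> approx L F \<Longrightarrow> approx L (\<lambda>\<zeta>. F \<zeta> ^ n)"
proof (induction n)
  case 0 then show ?case using approx_const[of L 1] by simp
next
  case (Suc n)
  then show ?case using approx_mult[OF Suc.prems(1) Suc.prems(2) Suc.IH[OF Suc.prems]] by simp
qed

lemma approx_sum:
  assumes "bounded L" "\<And>k. k < (n::nat) \<Longrightarrow> approx L (F k)"
  shows "approx L (\<lambda>\<zeta>. \<Sum>k<n. F k \<zeta>)"
  using assms(2)
proof (induction n)
  case 0 then show ?case using approx_const[of L 0] by simp
next
  case (Suc n)
  then have "approx L (\<lambda>\<zeta>. (\<Sum>k<n. F k \<zeta>) + F n \<zeta>)" by (intro approx_add) auto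
  then show ?case by simp
qed

lemma approx_lim:
  assumes "\<And>\<eta>. \<eta> > 0 \<Longrightarrow> \<exists>G. approx L G \<and> (\<forall>\<zeta>\<in>L. cmod (F \<zeta> - G \<zeta>) \<le> \<eta>)"
  shows "approx L F"
  unfolding approx_def
proof (intro allI impI)
  fix \<eta> :: real assume eta: "\<eta> > 0"
  obtain G where G: "approx L G" "\<forall>\<zeta>\<in>L. cmod (F \<zeta> - G \<zeta>) \<le> \<eta>/2" using assms[of "\<eta>/2"] eta by auto
  obtain q where q: "upf q" "\<forall>\<zeta>\<in>L. cmod (G \<zeta> - q \<zeta>) \<le> \<eta>/2"
    using G(1) eta unfolding approx_def by (meson half_gt_zero)
  have "\<forall>\<zeta>\<in>L. cmod (F \<zeta> - q \<zeta>) \<le> \<eta>"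
  proof
    fix \<zeta> assume z: "\<zeta> \<in> L"
    have "cmod (F \<zeta> - q \<zeta>) \<le> cmod (F \<zeta> - G \<zeta>) + cmod (G \<zeta> - q \<zeta>)" by (rule norm_diff_triangle_le) auto
    then show "cmod (F \<zeta> - q \<zeta>) \<le> \<eta>" using G(2) q(2) z by fastforce
  qed
  then show "\<exists>q. upf q \<and> (\<forall>\<zeta>\<in>L. cmod (F \<zeta> - q \<zeta>) \<le> \<eta>)" using q(1) by blast
qed

lemma half_pow_small: "\<eta> > 0 \<Longrightarrow> \<exists>K::nat. (1/2::real)^K \<le> \<eta>"
  using real_arch_pow_inv[of \<eta> "1/2::real"] by (auto intro: less_imp_le)

lemma approx_far:
  assumes B: "B \<ge> 0" "\<forall>\<zeta>\<in>L. cmod \<zeta> \<le> B" and b: "cmod b \<ge> 2 * B + 1"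
  shows "approx L (\<lambda>\<zeta>. 1 / (\<zeta> - b))"
  unfolding approx_def
proof (intro allI impI)
  fix \<eta> :: real assume eta: "\<eta> > 0"
  obtain K where K: "(1/2::real)^K \<le> \<eta>" using half_pow_small[OF eta] by blast
  have b0: "b \<noteq> 0" using b B by auto
  define q where "q \<zeta> = - (\<Sum>k<K. \<zeta>^k * inverse (b^(k+1)))" for \<zeta>
  have uq: "upf q" unfolding q_def[abs_def]
    by (intro upf_diff[of "\<lambda>z. 0", simplified] upf_sum upf_mult upf_power upf_id upf_const)
  have "\<forall>\<zeta>\<in>L. cmod (1 / (\<zeta> - b) - q \<zeta>) \<le> \<eta>"
  proof
    fix \<zeta> assume z: "\<zeta> \<in> L"
    define x where "x = \<zeta> / b"
    have zb: "cmod \<zeta> \<le> B" using B z by auto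
    have x: "cmod x \<le> 1/2"
    proof -
      have "cmod x = cmod \<zeta> / cmod b" by (simp add: x_def norm_divide)
      also have "\<dots> \<le> 1/2"
      proof -
        have "cmod b > 0" using b B by linarith
        then show ?thesis using zb b B by (simp add: divide_le_eq)
      qed
      finally show ?thesis .
    qed
    have zbne: "\<zeta> - b \<noteq> 0" using zb b B by auto
    have dist: "cmod (\<zeta> - b) \<ge> 1"
    proof -
      have "cmod b \<le> cmod (\<zeta> - b) + cmod \<zeta>" by (metis add.commute diff_add_cancel norm_minus_commute norm_triangle_ineq norm_diff_triangle_ineq)
      then show ?thesis using zb b B by linarith
    qed
    have x1: "x \<noteq> 1" using x by auto
    have qz: "q \<zeta> = - (1/b) * (\<Sum>k<K. x^k)"
      by (simp add: q_def x_def sum_distrib_left power_divide field_simps sum_negf)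
    have geo: "(\<Sum>k<K. x^k) = (1 - x^K) / (1 - x)"
      using x1 by (simp add: sum_gp_strict)
    have "1 / (\<zeta> - b) - q \<zeta> = x^K / (\<zeta> - b)"
      unfolding qz geo using b0 zbne x1
      by (simp add: x_def field_simps)
    then have "cmod (1 / (\<zeta> - b) - q \<zeta>) = cmod x ^ K / cmod (\<zeta> - b)"
      by (simp add: norm_divide norm_power)
    also have "\<dots> \<le> cmod x ^ K / 1" using dist by (intro divide_left_mono) auto
    also have "\<dots> \<le> (1/2)^K" using x by (simp add: power_mono)
    finally show "cmod (1 / (\<zeta> - b) - q \<zeta>) \<le> \<eta>" using K by linarith
  qed
  then show "\<exists>q. upf q \<and> (\<forall>\<zeta>\<in>L. cmod (1 / (\<zeta> - b) - q \<zeta>) \<le> \<eta>)" using uq by blast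
qed

lemma approx_step:
  assumes L: "bounded L" and d: "d > 0" and far: "\<forall>\<zeta>\<in>L. cmod (\<zeta> - b') \<ge> d"
    and bb: "cmod (b - b') \<le> d/2" and A: "approx L (\<lambda>\<zeta>. 1/(\<zeta> - b'))"
  shows "approx L (\<lambda>\<zeta>. 1/(\<zeta> - b))"
proof (rule approx_lim)
  fix \<eta> :: real assume eta: "\<eta> > 0"
  obtain K where K: "(1/2::real)^K \<le> \<eta> * d / 2" using half_pow_small[of "\<eta> * d / 2"] eta d by auto
  define G where "G \<zeta> = (\<Sum>k<K. (b - b')^k * (1/(\<zeta> - b'))^(k+1))" for \<zeta>
  have aG: "approx L G" unfolding G_def[abs_def]
    by (intro approx_sum L approx_mult approx_power A approx_const)
  have "\<forall>\<zeta>\<in>L. cmod (1/(\<zeta> - b) - G \<zeta>) \<le> \<eta>"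
  proof
    fix \<zeta> assume z: "\<zeta> \<in> L"
    have zd: "cmod (\<zeta> - b') \<ge> d" using far z by auto
    have z0: "\<zeta> - b' \<noteq> 0" using zd d by auto
    have zb: "cmod (\<zeta> - b) \<ge> d/2"
    proof -
      have "cmod (\<zeta> - b') \<le> cmod (\<zeta> - b) + cmod (b - b')" by (rule norm_diff_triangle_le) auto
      then show ?thesis using zd bb by linarith
    qed
    have z1: "\<zeta> - b \<noteq> 0" using zb d by auto
    define y where "y = (b - b') / (\<zeta> - b')"
    have y: "cmod y \<le> 1/2"
    proof -
      have "cmod y = cmod (b - b') / cmod (\<zeta> - b')" by (simp add: y_def norm_divide)
      also have "\<dots> \<le> (d/2) / d" using bb zd d by (intro frac_le) auto
      also have "\<dots> = 1/2" using d by simp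
      finally show ?thesis .
    qed
    have y1: "y \<noteq> 1" using y by auto
    have "G \<zeta> = (\<Sum>k<K. y^k) / (\<zeta> - b')"
      unfolding G_def sum_divide_distrib
      by (rule sum.cong) (simp_all add: y_def power_divide field_simps)
    also have "\<dots> = (1 - y^K) / (1 - y) / (\<zeta> - b')" using y1 by (simp add: sum_gp_strict)
    finally have Gz: "G \<zeta> = (1 - y^K) / (1 - y) / (\<zeta> - b')" .
    have "1 - y = (\<zeta> - b) / (\<zeta> - b')" using z0 by (simp add: y_def field_simps)
    then have "1/(\<zeta> - b) - G \<zeta> = y^K / (\<zeta> - b)" unfolding Gz using z0 z1 y1
      by (simp add: field_simps)
    then have "cmod (1/(\<zeta> - b) - G \<zeta>) = cmod y ^ K / cmod (\<zeta> - b)" by (simp add: norm_divide norm_power)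
    also have "\<dots> \<le> (1/2)^K / (d/2)" using y zb d by (intro frac_le power_mono) auto
    also have "\<dots> \<le> \<eta>" using K d by (simp add: field_simps)
    finally show "cmod (1/(\<zeta> - b) - G \<zeta>) \<le> \<eta>" .
  qed
  then show "\<exists>G. approx L G \<and> (\<forall>\<zeta>\<in>L. cmod (1 / (\<zeta> - b) - G \<zeta>) \<le> \<eta>)" using aG by blast
qed

lemma approx_segment:
  assumes L: "bounded L" and d: "d > 0"
    and seg: "\<forall>t\<in>{0..1::real}. \<forall>\<zeta>\<in>L. cmod (x + of_real t * (y - x) - \<zeta>) \<ge> d"
    and A: "approx L (\<lambda>\<zeta>. 1/(\<zeta> - y))"
  shows "approx L (\<lambda>\<zeta>. 1/(\<zeta> - x))"
proof -
  obtain M :: nat where M: "real M > 2 * cmod (y - x) / d" using reals_Archimedean2 by blast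
  define M' where "M' = Suc M"
  have M'pos: "real M' > 0" by (simp add: M'_def)
  have Mb: "cmod (y - x) / real M' \<le> d/2"
  proof -
    have "2 * cmod (y - x) / d < real M'" using M by (simp add: M'_def)
    then have "2 * cmod (y - x) < real M' * d" using d by (simp add: field_simps)
    then show ?thesis using M'pos d by (simp add: field_simps)
  qed
  define pt where "pt j = x + of_real (real j / real M') * (y - x)" for j :: nat
  have "j \<le> M' \<Longrightarrow> approx L (\<lambda>\<zeta>. 1/(\<zeta> - pt (M' - j)))" for j
  proof (induction j)
    case 0
    have "pt M' = y" using M'pos by (simp add: pt_def)
    then show ?case using A by simp
  next
    case (Suc j)
    have jl: "j < M'" using Suc.prems by simp
    have IH: "approx L (\<lambda>\<zeta>. 1/(\<zeta> - pt (M' - j)))" using Suc.IH Suc.prems by simp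
    have t01: "real (M' - j) / real M' \<in> {0..1}" using jl M'pos by (auto simp: field_simps)
    have far: "\<forall>\<zeta>\<in>L. cmod (\<zeta> - pt (M' - j)) \<ge> d"
    proof
      fix \<zeta> assume "\<zeta> \<in> L"
      then have "d \<le> cmod (x + of_real (real (M'-j)/real M') * (y - x) - \<zeta>)" using seg t01 by blast
      then show "cmod (\<zeta> - pt (M' - j)) \<ge> d" unfolding pt_def by (metis norm_minus_commute)
    qed
    have eq: "M' - j = Suc (M' - Suc j)" using jl by simp
    have "pt (M' - Suc j) - pt (M' - j) = - (of_real (1 / real M') * (y - x))"
    proof -
      have "complex_of_nat M' \<noteq> 0" using M'pos by simp
      then show ?thesis unfolding eq pt_def by (simp add: field_simps of_nat_Suc)
    qed
    then have "cmod (pt (M' - Suc j) - pt (M' - j)) = cmod (y - x) / real M'"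
      using M'pos by (simp add: norm_mult norm_divide)
    then have "cmod (pt (M' - Suc j) - pt (M' - j)) \<le> d/2" using Mb by simp
    then show ?case using approx_step[OF L d far _ IH] by blast
  qed
  from this[of M'] show ?thesis by (simp add: pt_def)
qed

lemma lattice_zero: "0 \<in> lattice c"
  unfolding lattice_def by (rule CollectI, rule exI[of _ 0], rule exI[of _ 0]) (simp add: complex_eq_iff)

lemma lattice_diff: "x \<in> lattice c \<Longrightarrow> y \<in> lattice c \<Longrightarrow> x - y \<in> lattice c"
  unfolding lattice_def
proof clarify
  fix k l k' l' :: int
  show "\<exists>k'' l''. complex_of_real c * Complex (of_int k) (of_int l) - complex_of_real c * Complex (of_int k') (of_int l')
     = complex_of_real c * Complex (of_int k'') (of_int l'')"
    by (rule exI[of _ "k - k'"], rule exI[of _ "l - l'"]) (simp add: complex_eq_iff algebra_simps)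
qed

lemma lattice_ReIm: "x \<in> lattice c \<Longrightarrow> \<exists>k l::int. Re x = c * of_int k \<and> Im x = c * of_int l"
  unfolding lattice_def by auto

lemma scale_round: "\<bar>of_int k - x / (c::real)\<bar> \<le> 1/2 \<Longrightarrow> c > 0 \<Longrightarrow> \<bar>c * of_int k - x\<bar> \<le> c/2"
proof -
  assume h: "\<bar>of_int k - x / c\<bar> \<le> 1/2" and c: "c > 0"
  have c0: "c \<noteq> 0" using c by simp
  have "c * of_int k - x = c * (of_int k - x / c)" using c0 by (simp add: right_diff_distrib)
  then have "\<bar>c * of_int k - x\<bar> = c * \<bar>of_int k - x / c\<bar>" using c by (simp add: abs_mult)
  also have "\<dots> \<le> c * (1/2)" using h c by (intro mult_left_mono) auto
  finally show ?thesis by simp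
qed

lemma lattice_round:
  assumes "c > 0"
  shows "\<exists>\<tau>\<in>lattice c. \<bar>Re (b - \<tau>)\<bar> \<le> c/2 \<and> \<bar>Im (b - \<tau>)\<bar> \<le> c/2"
proof -
  define k where "k = round (Re b / c)"
  define l where "l = round (Im b / c)"
  define \<tau> where "\<tau> = complex_of_real c * Complex (of_int k) (of_int l)"
  have t: "\<tau> \<in> lattice c" unfolding lattice_def \<tau>_def by blast
  have "\<bar>of_int k - Re b / c\<bar> \<le> 1/2" unfolding k_def by (rule of_int_round_abs_le)
  then have "\<bar>c * of_int k - Re b\<bar> \<le> c/2" using assms
    by (rule scale_round) 
  moreover have "\<bar>of_int l - Im b / c\<bar> \<le> 1/2" unfolding l_def by (rule of_int_round_abs_le)
  then have "\<bar>c * of_int l - Im b\<bar> \<le> c/2" using assms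
    by (rule scale_round) 
  ultimately show ?thesis using t by (intro bexI[of _ \<tau>]) (auto simp: \<tau>_def abs_minus_commute)
qed

lemma coord_sq:
  assumes c: "(c::real) > 0" and x: "\<bar>x\<bar> \<le> c/2"
  shows "x^2 \<le> (x - c * of_int k)^2"
proof -
  have e: "(x - c * of_int k)^2 - x^2 = (c * of_int k) * (c * of_int k - 2 * x)"
    by (simp add: power2_eq_square algebra_simps)
  have "(c * of_int k) * (c * of_int k - 2 * x) \<ge> 0"
  proof (cases "k > 0")
    case True
    then have "of_int k \<ge> (1::real)" by simp
    then have "c * of_int k \<ge> c" using mult_left_mono[of 1 "of_int k" c] c by simp
    moreover have "\<bar>x\<bar> \<ge> x" by simp
    ultimately have h2: "c * of_int k - 2 * x \<ge> 0" using x by linarith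
    have h1: "c * of_int k \<ge> 0" using c \<open>c * of_int k \<ge> c\<close> by linarith
    show ?thesis by (rule mult_nonneg_nonneg[OF h1 h2])
  next
    case False
    show ?thesis
    proof (cases "k = 0")
      case True then show ?thesis by simp
    next
      case False
      with \<open>\<not> k > 0\<close> have "of_int k \<le> (-1::real)" by simp
      then have "c * of_int k \<le> -c" using mult_left_mono[of "of_int k" "-1" c] c by simp
      moreover have "\<bar>x\<bar> \<ge> -x" by simp
      ultimately have h2: "c * of_int k - 2 * x \<le> 0" using x by linarith
      have h1: "c * of_int k \<le> 0" using c \<open>c * of_int k \<le> -c\<close> by linarith
      show ?thesis by (rule mult_nonpos_nonpos[OF h1 h2])
    qed
  qed
  then show ?thesis using e by linarith
qed

lemma voronoi:
  assumes c: "c > 0" and w: "\<bar>Re w\<bar> \<le> c/2" "\<bar>Im w\<bar> \<le> c/2" and s: "\<sigma> \<in> lattice c"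
  shows "cmod w \<le> cmod (w - \<sigma>)"
proof -
  obtain k l where kl: "Re \<sigma> = c * of_int k" "Im \<sigma> = c * of_int l" using lattice_ReIm[OF s] by blast
  have "(Re w)^2 \<le> (Re w - c * of_int k)^2" by (rule coord_sq[OF c w(1)])
  moreover have "(Im w)^2 \<le> (Im w - c * of_int l)^2" by (rule coord_sq[OF c w(2)])
  ultimately show ?thesis unfolding cmod_def using kl by (intro real_sqrt_le_mono) simp
qed

lemma nearest:
  assumes c: "c > 0"
  shows "\<exists>\<tau>0\<in>lattice c. \<bar>Re (b - \<tau>0)\<bar> \<le> c/2 \<and> \<bar>Im (b - \<tau>0)\<bar> \<le> c/2 \<and>
            (\<forall>\<sigma>\<in>lattice c. cmod (b - \<tau>0) \<le> cmod (b - \<sigma>))"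
proof -
  obtain \<tau>0 where t: "\<tau>0 \<in> lattice c" "\<bar>Re (b - \<tau>0)\<bar> \<le> c/2" "\<bar>Im (b - \<tau>0)\<bar> \<le> c/2"
    using lattice_round[OF c] by blast
  have "\<forall>\<sigma>\<in>lattice c. cmod (b - \<tau>0) \<le> cmod (b - \<sigma>)"
  proof
    fix \<sigma> assume s: "\<sigma> \<in> lattice c"
    have "cmod (b - \<tau>0) \<le> cmod ((b - \<tau>0) - (\<sigma> - \<tau>0))"
      by (rule voronoi[OF c t(2) t(3) lattice_diff[OF s t(1)]])
    then show "cmod (b - \<tau>0) \<le> cmod (b - \<sigma>)" by simp
  qed
  then show ?thesis using t by blast
qed

lemma half_int:
  assumes c: "(c::real) > 0" and s: "\<bar>s\<bar> = c/2"
  shows "\<bar>s + c * of_int j\<bar> \<ge> c/2"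
proof (cases "j > 0")
  case True
  then have "of_int j \<ge> (1::real)" by simp
  then have "c * of_int j \<ge> c" using mult_left_mono[of 1 "of_int j" c] c by simp
  then show ?thesis using s by linarith
next
  case False
  show ?thesis
  proof (cases "j = 0")
    case True then show ?thesis using s by simp
  next
    case False
    with \<open>\<not> j > 0\<close> have "of_int j \<le> (-1::real)" by simp
    then have "c * of_int j \<le> -c" using mult_left_mono[of "of_int j" "-1" c] c by simp
    then show ?thesis using s by linarith
  qed
qed

lemma midline_Re:
  assumes c: "c > 0" and t: "\<tau>0 \<in> lattice c" and x: "\<bar>Re (x - \<tau>0)\<bar> = c/2" and s: "\<sigma> \<in> lattice c"
  shows "cmod (x - \<sigma>) \<ge> c/2"
proof -
  obtain j l where jl: "Re (\<tau>0 - \<sigma>) = c * of_int j" using lattice_ReIm[OF lattice_diff[OF t s]] by blast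
  have "Re (x - \<sigma>) = Re (x - \<tau>0) + c * of_int j" using jl unfolding minus_complex.sel by linarith
  then have "\<bar>Re (x - \<sigma>)\<bar> = \<bar>Re (x - \<tau>0) + c * of_int j\<bar>" by (simp only:)
  then have "\<bar>Re (x - \<sigma>)\<bar> \<ge> c/2" using half_int[OF c x, of j] by linarith
  then show ?thesis using abs_Re_le_cmod[of "x - \<sigma>"] by linarith
qed

lemma midline_Im:
  assumes c: "c > 0" and t: "\<tau>0 \<in> lattice c" and x: "\<bar>Im (x - \<tau>0)\<bar> = c/2" and s: "\<sigma> \<in> lattice c"
  shows "cmod (x - \<sigma>) \<ge> c/2"
proof -
  obtain j where jl: "Im (\<tau>0 - \<sigma>) = c * of_int j" using lattice_ReIm[OF lattice_diff[OF t s]] by blast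
  have "Im (x - \<sigma>) = Im (x - \<tau>0) + c * of_int j" using jl unfolding minus_complex.sel by linarith
  then have "\<bar>Im (x - \<sigma>)\<bar> = \<bar>Im (x - \<tau>0) + c * of_int j\<bar>" by (simp only:)
  then have "\<bar>Im (x - \<sigma>)\<bar> \<ge> c/2" using half_int[OF c x, of j] by linarith
  then show ?thesis using abs_Im_le_cmod[of "x - \<sigma>"] by linarith
qed

lemma escape:
  assumes c: "c > 0" and R: "R \<ge> 0" and d0: "d0 > 0" and Rd: "R + d0 \<le> c/2"
    and L: "bounded L" and Lnb: "\<forall>\<zeta>\<in>L. \<exists>\<tau>\<in>lattice c. cmod (\<zeta> - \<tau>) \<le> R"
    and hb: "\<forall>\<tau>\<in>lattice c. cmod (b - \<tau>) \<ge> R + d0"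
  shows "approx L (\<lambda>\<zeta>. 1/(\<zeta> - b))"
proof -
  have DL: "\<forall>\<zeta>\<in>L. cmod (x - \<zeta>) \<ge> d0" if hx: "\<forall>\<tau>\<in>lattice c. cmod (x - \<tau>) \<ge> R + d0" for x
  proof
    fix \<zeta> assume z: "\<zeta> \<in> L"
    obtain \<tau> where t: "\<tau> \<in> lattice c" "cmod (\<zeta> - \<tau>) \<le> R" using Lnb z by blast
    have "cmod (x - \<tau>) \<le> cmod (x - \<zeta>) + cmod (\<zeta> - \<tau>)" by (rule norm_diff_triangle_le) auto
    then show "cmod (x - \<zeta>) \<ge> d0" using hx t by fastforce
  qed
  have seg: "approx L (\<lambda>\<zeta>. 1/(\<zeta> - x))"
    if hs: "\<forall>t\<in>{0..1::real}. \<forall>\<tau>\<in>lattice c. cmod (x + of_real t * (y - x) - \<tau>) \<ge> R + d0"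
      and A: "approx L (\<lambda>\<zeta>. 1/(\<zeta> - y))" for x y
  proof (rule approx_segment[OF L d0 _ A])
    show "\<forall>t\<in>{0..1}. \<forall>\<zeta>\<in>L. d0 \<le> cmod (x + complex_of_real t * (y - x) - \<zeta>)"
      using DL hs by blast
  qed
  obtain B0 where B0: "\<forall>\<zeta>\<in>L. cmod \<zeta> \<le> B0" using L by (auto simp: bounded_iff)
  define B where "B = \<bar>B0\<bar>"
  have B: "B \<ge> 0" "\<forall>\<zeta>\<in>L. cmod \<zeta> \<le> B" using B0 by (auto simp: B_def)
  obtain \<tau>0 where t0: "\<tau>0 \<in> lattice c" "\<bar>Re (b - \<tau>0)\<bar> \<le> c/2" "\<bar>Im (b - \<tau>0)\<bar> \<le> c/2"
    using nearest[OF c] by blast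
  define v where "v = b - \<tau>0"
  define \<mu> where "\<mu> = max \<bar>Re v\<bar> \<bar>Im v\<bar>"
  have vR: "cmod v \<ge> R + d0" using hb t0(1) by (simp add: v_def)
  have "cmod v \<le> 2 * \<mu>" using cmod_le[of v] by (simp add: \<mu>_def)
  then have mu0: "\<mu> > 0" using vR R d0 by linarith
  have muc: "\<mu> \<le> c/2" using t0 by (simp add: \<mu>_def v_def)
  define lam1 where "lam1 = c / (2 * \<mu>)"
  have l1: "lam1 \<ge> 1" using mu0 muc by (simp add: lam1_def field_simps)
  have l1mu: "lam1 * \<mu> = c/2" using mu0 by (simp add: lam1_def)
  define b1 where "b1 = \<tau>0 + of_real lam1 * v"
  have A1: "approx L (\<lambda>\<zeta>. 1/(\<zeta> - b1))"
  proof (cases "\<bar>Re v\<bar> = \<mu>")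
    case True
    define T where "T = 2 * B + 1 + cmod b1"
    define b2 where "b2 = b1 + \<i> * of_real T"
    have "cmod b2 \<ge> T - cmod b1"
    proof -
      have T0: "T \<ge> 0" unfolding T_def using B(1) by simp
      have "cmod (\<i> * of_real T) = T" using T0 by (simp add: norm_mult)
      moreover have "cmod (\<i> * of_real T) \<le> cmod b2 + cmod b1"
        using norm_triangle_ineq4[of b2 b1] by (simp add: b2_def)
      ultimately show ?thesis by linarith
    qed
    then have "cmod b2 \<ge> 2 * B + 1" by (simp add: T_def)
    then have A2: "approx L (\<lambda>\<zeta>. 1/(\<zeta> - b2))" by (rule approx_far[OF B])
    have "\<forall>t\<in>{0..1::real}. \<forall>\<tau>\<in>lattice c. cmod (b1 + of_real t * (b2 - b1) - \<tau>) \<ge> R + d0"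
    proof (intro ballI)
      fix t :: real and \<tau> assume "t \<in> {0..1}" "\<tau> \<in> lattice c"
      have "\<bar>Re (b1 + of_real t * (b2 - b1) - \<tau>0)\<bar> = lam1 * \<bar>Re v\<bar>"
        using l1 by (simp add: b2_def b1_def abs_mult)
      also have "\<dots> = c/2" using True l1mu by simp
      finally have "cmod (b1 + of_real t * (b2 - b1) - \<tau>) \<ge> c/2"
        by (rule midline_Re[OF c t0(1) _ \<open>\<tau> \<in> lattice c\<close>])
      then show "cmod (b1 + of_real t * (b2 - b1) - \<tau>) \<ge> R + d0" using Rd by linarith
    qed
    then show ?thesis using seg A2 by blast
  next
    case False
    then have Im: "\<bar>Im v\<bar> = \<mu>" by (simp add: \<mu>_def max_def split: if_splits)
    define T where "T = 2 * B + 1 + cmod b1"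
    define b2 where "b2 = b1 + of_real T"
    have "cmod b2 \<ge> T - cmod b1"
    proof -
      have T0: "T \<ge> 0" unfolding T_def using B(1) by simp
      have "cmod (of_real T :: complex) = T" using T0 by simp
      moreover have "cmod (of_real T :: complex) \<le> cmod b2 + cmod b1"
        using norm_triangle_ineq4[of b2 b1] by (simp add: b2_def)
      ultimately show ?thesis by linarith
    qed
    then have "cmod b2 \<ge> 2 * B + 1" by (simp add: T_def)
    then have A2: "approx L (\<lambda>\<zeta>. 1/(\<zeta> - b2))" by (rule approx_far[OF B])
    have "\<forall>t\<in>{0..1::real}. \<forall>\<tau>\<in>lattice c. cmod (b1 + of_real t * (b2 - b1) - \<tau>) \<ge> R + d0"
    proof (intro ballI)
      fix t :: real and \<tau> assume "t \<in> {0..1}" "\<tau> \<in> lattice c"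
      have "\<bar>Im (b1 + of_real t * (b2 - b1) - \<tau>0)\<bar> = lam1 * \<bar>Im v\<bar>"
        using l1 by (simp add: b2_def b1_def abs_mult)
      also have "\<dots> = c/2" using Im l1mu by simp
      finally have "cmod (b1 + of_real t * (b2 - b1) - \<tau>) \<ge> c/2"
        by (rule midline_Im[OF c t0(1) _ \<open>\<tau> \<in> lattice c\<close>])
      then show "cmod (b1 + of_real t * (b2 - b1) - \<tau>) \<ge> R + d0" using Rd by linarith
    qed
    then show ?thesis using seg A2 by blast
  qed
  have "\<forall>t\<in>{0..1::real}. \<forall>\<tau>\<in>lattice c. cmod (b + of_real t * (b1 - b) - \<tau>) \<ge> R + d0"
  proof (intro ballI)
    fix t :: real and \<tau> assume t: "t \<in> {0..1}" and tau: "\<tau> \<in> lattice c"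
    define lam where "lam = 1 + t * (lam1 - 1)"
    have tt: "t * (lam1 - 1) \<le> 1 * (lam1 - 1)" using t l1 by (intro mult_right_mono) auto
    have lam: "lam \<ge> 1" "lam \<le> lam1" using t l1 tt by (auto simp: lam_def)
    have eq: "b + of_real t * (b1 - b) - \<tau>0 = of_real lam * v"
      by (simp add: b1_def v_def lam_def algebra_simps)
    have "\<bar>Re (of_real lam * v)\<bar> \<le> c/2"
    proof -
      have "\<bar>Re (of_real lam * v)\<bar> = lam * \<bar>Re v\<bar>" using lam by (simp add: abs_mult)
      also have "\<dots> \<le> lam1 * \<mu>" using lam mu0 by (intro mult_mono) (auto simp: \<mu>_def)
      finally show ?thesis using l1mu by simp
    qed
    moreover have "\<bar>Im (of_real lam * v)\<bar> \<le> c/2"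
    proof -
      have "\<bar>Im (of_real lam * v)\<bar> = lam * \<bar>Im v\<bar>" using lam by (simp add: abs_mult)
      also have "\<dots> \<le> lam1 * \<mu>" using lam mu0 by (intro mult_mono) (auto simp: \<mu>_def)
      finally show ?thesis using l1mu by simp
    qed
    ultimately have "cmod (of_real lam * v) \<le> cmod (of_real lam * v - (\<tau> - \<tau>0))"
      by (rule voronoi[OF c _ _ lattice_diff[OF tau t0(1)]])
    moreover have "cmod (of_real lam * v) \<ge> cmod v" using lam by (simp add: norm_mult mult_le_cancel_right1)
    moreover have "of_real lam * v - (\<tau> - \<tau>0) = b + of_real t * (b1 - b) - \<tau>" using eq by (simp add: algebra_simps)
    ultimately show "cmod (b + of_real t * (b1 - b) - \<tau>) \<ge> R + d0" using vR by simp
  qed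
  then show ?thesis using seg A1 by blast
qed

lemma indicator_approx:
  assumes c: "c > 0" and R: "R \<ge> 0" "R < c/3" and L: "bounded L"
    and Lnb: "\<forall>\<zeta>\<in>L. \<exists>\<tau>\<in>lattice c. cmod (\<zeta> - \<tau>) \<le> R"
    and t0: "\<tau>0 \<in> lattice c" and eta: "\<eta> > 0"
  shows "\<exists>q. upf q \<and> (\<forall>\<zeta>\<in>L. cmod (\<zeta> - \<tau>0) \<le> R \<longrightarrow> cmod (q \<zeta> - 1) \<le> \<eta>)
              \<and> (\<forall>\<zeta>\<in>L. cmod (\<zeta> - \<tau>0) > R \<longrightarrow> cmod (q \<zeta>) \<le> \<eta>)"
proof -
  define \<rho> where "\<rho> = c/2"
  have rho: "\<rho> > 0" using c by (simp add: \<rho>_def)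
  define w where "w \<zeta> = (\<zeta> - \<tau>0) / of_real \<rho>" for \<zeta>
  have RC: "\<forall>\<alpha>. cmod \<alpha> = 1 \<longrightarrow> approx L (\<lambda>\<zeta>. 1 / (w \<zeta> ^ (2^j) - \<alpha>))" for j
  proof (induction j)
    case 0
    show ?case
    proof (intro allI impI)
      fix \<alpha> :: complex assume a: "cmod \<alpha> = 1"
      define b where "b = \<tau>0 + of_real \<rho> * \<alpha>"
      have hb: "\<forall>\<tau>\<in>lattice c. cmod (b - \<tau>) \<ge> R + (c/2 - R)"
      proof
        fix \<tau> assume t: "\<tau> \<in> lattice c"
        show "cmod (b - \<tau>) \<ge> R + (c/2 - R)"
        proof (cases "\<tau> = \<tau>0")
          case True
          then show ?thesis using a rho by (simp add: b_def norm_mult \<rho>_def)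
        next
          case False
          have "c \<le> cmod (\<tau> - \<tau>0)" using lattice_sep[OF c t t0 False] .
          moreover have "cmod (\<tau> - \<tau>0) \<le> cmod (b - \<tau>) + cmod (b - \<tau>0)"
          proof -
            have "cmod (\<tau> - \<tau>0) = cmod ((\<tau> - b) + (b - \<tau>0))" by simp
            also have "\<dots> \<le> cmod (\<tau> - b) + cmod (b - \<tau>0)" by (rule norm_triangle_ineq)
            finally show ?thesis by (simp add: norm_minus_commute)
          qed
          moreover have "cmod (b - \<tau>0) = c/2" using a rho by (simp add: b_def norm_mult \<rho>_def)
          ultimately show ?thesis by linarith
        qed
      qed
      have A: "approx L (\<lambda>\<zeta>. 1 / (\<zeta> - b))"
        by (rule escape[OF c R(1) _ _ L Lnb hb]) (use R in auto)
      have "approx L (\<lambda>\<zeta>. of_real \<rho> * (1 / (\<zeta> - b)))" by (intro approx_mult L approx_const A)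
      moreover have "of_real \<rho> * (1 / (\<zeta> - b)) = 1 / (w \<zeta> ^ (2^0) - \<alpha>)" for \<zeta>
      proof -
        have "w \<zeta> - \<alpha> = (\<zeta> - b) / of_real \<rho>" using rho by (simp add: w_def b_def field_simps)
        then show ?thesis by simp
      qed
      ultimately show "approx L (\<lambda>\<zeta>. 1 / (w \<zeta> ^ (2^0) - \<alpha>))" by simp
    qed
  next
    case (Suc j)
    show ?case
    proof (intro allI impI)
      fix \<alpha> :: complex assume a: "cmod \<alpha> = 1"
      define \<beta> where "\<beta> = csqrt \<alpha>"
      have b1: "cmod \<beta> = 1" "cmod (-\<beta>) = 1" using a by (auto simp: \<beta>_def)
      have A1: "approx L (\<lambda>\<zeta>. 1 / (w \<zeta> ^ (2^j) - \<beta>))" using Suc.IH b1 by blast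
      have A2: "approx L (\<lambda>\<zeta>. 1 / (w \<zeta> ^ (2^j) - (-\<beta>)))" using Suc.IH b1 by blast
      have "approx L (\<lambda>\<zeta>. 1 / (w \<zeta> ^ (2^j) - \<beta>) * (1 / (w \<zeta> ^ (2^j) - (-\<beta>))))"
        by (rule approx_mult[OF L A1 A2])
      moreover have "1 / (w \<zeta> ^ (2^j) - \<beta>) * (1 / (w \<zeta> ^ (2^j) - (-\<beta>))) = 1 / (w \<zeta> ^ (2^Suc j) - \<alpha>)" for \<zeta>
      proof -
        have "(w \<zeta> ^ (2^j) - \<beta>) * (w \<zeta> ^ (2^j) - (-\<beta>)) = (w \<zeta> ^ (2^j))^2 - \<beta>^2"
          by (simp add: power2_eq_square algebra_simps)
        also have "\<dots> = w \<zeta> ^ (2^Suc j) - \<alpha>"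
          by (simp add: \<beta>_def power_mult[symmetric] mult.commute)
        finally have eq: "(w \<zeta> ^ (2^j) - \<beta>) * (w \<zeta> ^ (2^j) - (-\<beta>)) = w \<zeta> ^ (2^Suc j) - \<alpha>" .
        have "1 / (w \<zeta> ^ (2^j) - \<beta>) * (1 / (w \<zeta> ^ (2^j) - (-\<beta>)))
           = 1 / ((w \<zeta> ^ (2^j) - \<beta>) * (w \<zeta> ^ (2^j) - (-\<beta>)))"
          by (simp add: divide_inverse inverse_mult_distrib)
        then show ?thesis using eq by simp
      qed
      ultimately show "approx L (\<lambda>\<zeta>. 1 / (w \<zeta> ^ (2^Suc j) - \<alpha>))" by simp
    qed
  qed
  define e where "e = min (1/4) (\<eta>/4)"
  have e: "e > 0" "e \<le> 1/4" "e \<le> \<eta>/4" using eta by (auto simp: e_def)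
  obtain j where j: "(3/4::real)^j < e" using real_arch_pow_inv[of e "3/4::real"] e by auto
  define N where "N = (2::nat)^j"
  have jN: "j \<le> N" unfolding N_def using less_exp[of j] by simp
  have "(3/4::real)^N \<le> (3/4)^j" by (rule power_decreasing[OF jN]) auto
  then have p34: "(3/4::real)^N \<le> e" using j by linarith
  have p23: "(2/3::real)^N \<le> e"
    using power_mono[of "2/3::real" "3/4" N] p34 by simp
  have p43: "(4/3::real)^N \<ge> 1/e"
  proof -
    have "(4/3::real)^N = 1 / (3/4)^N" by (simp add: power_divide)
    then show ?thesis using p34 e by (simp add: frac_le)
  qed
  have Ah: "approx L (\<lambda>\<zeta>. 1 / (w \<zeta> ^ N - (-1)))" using RC[of j] unfolding N_def
    by (metis norm_minus_cancel norm_one)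
  obtain q where q: "upf q" "\<forall>\<zeta>\<in>L. cmod (1 / (w \<zeta> ^ N - (-1)) - q \<zeta>) \<le> \<eta>/2"
    using Ah eta unfolding approx_def by (meson half_gt_zero)
  have own: "cmod (q \<zeta> - 1) \<le> \<eta>" if z: "\<zeta> \<in> L" "cmod (\<zeta> - \<tau>0) \<le> R" for \<zeta>
  proof -
    have wz: "cmod (w \<zeta>) \<le> 2/3"
    proof -
      have "cmod (w \<zeta>) = cmod (\<zeta> - \<tau>0) / \<rho>" using rho by (simp add: w_def norm_divide)
      also have "\<dots> \<le> R / \<rho>" using z rho by (intro divide_right_mono) auto
      also have "\<dots> \<le> 2/3" using R rho by (simp add: \<rho>_def field_simps)
      finally show ?thesis .
    qed
    have wN: "cmod (w \<zeta> ^ N) \<le> e" using power_mono[OF wz, of N] p23 by (simp add: norm_power)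
    have den: "cmod (w \<zeta> ^ N + 1) \<ge> 3/4"
    proof -
      have "1 \<le> cmod (w \<zeta> ^ N + 1) + cmod (w \<zeta> ^ N)"
        using norm_triangle_ineq4[of "w \<zeta> ^ N + 1" "w \<zeta> ^ N"] by simp
      then show ?thesis using wN e by linarith
    qed
    have nz: "w \<zeta> ^ N + 1 \<noteq> 0" using den by auto
    have "1 / (w \<zeta> ^ N - (-1)) - 1 = - (w \<zeta> ^ N) / (w \<zeta> ^ N + 1)"
      using nz by (simp add: field_simps)
    then have "cmod (1 / (w \<zeta> ^ N - (-1)) - 1) = cmod (w \<zeta> ^ N) / cmod (w \<zeta> ^ N + 1)"
      by (simp add: norm_divide)
    also have "\<dots> \<le> e / (3/4)" using wN den e by (intro frac_le) auto
    also have "\<dots> \<le> \<eta>/2" using e by simp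
    finally have h1: "cmod (1 / (w \<zeta> ^ N - (-1)) - 1) \<le> \<eta>/2" .
    have "cmod (q \<zeta> - 1) \<le> cmod (q \<zeta> - 1 / (w \<zeta> ^ N - (-1))) + cmod (1 / (w \<zeta> ^ N - (-1)) - 1)"
      by (rule norm_diff_triangle_le) auto
    moreover have "cmod (q \<zeta> - 1 / (w \<zeta> ^ N - (-1))) \<le> \<eta>/2" using q(2) z(1) by (metis norm_minus_commute)
    ultimately show ?thesis using h1 by linarith
  qed
  have other: "cmod (q \<zeta>) \<le> \<eta>" if z: "\<zeta> \<in> L" "cmod (\<zeta> - \<tau>0) > R" for \<zeta>
  proof -
    obtain \<tau> where t: "\<tau> \<in> lattice c" "cmod (\<zeta> - \<tau>) \<le> R" using Lnb z by blast
    have "\<tau> \<noteq> \<tau>0" using t z by auto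
    then have "c \<le> cmod (\<tau> - \<tau>0)" using lattice_sep[OF c t(1) t0] by simp
    moreover have "cmod (\<tau> - \<tau>0) \<le> cmod (\<zeta> - \<tau>) + cmod (\<zeta> - \<tau>0)"
    proof -
      have "cmod (\<tau> - \<tau>0) = cmod ((\<tau> - \<zeta>) + (\<zeta> - \<tau>0))" by simp
      also have "\<dots> \<le> cmod (\<tau> - \<zeta>) + cmod (\<zeta> - \<tau>0)" by (rule norm_triangle_ineq)
      finally show ?thesis by (simp add: norm_minus_commute)
    qed
    ultimately have far: "cmod (\<zeta> - \<tau>0) \<ge> c - R" using t by linarith
    have wz: "cmod (w \<zeta>) \<ge> 4/3"
    proof -
      have "cmod (w \<zeta>) = cmod (\<zeta> - \<tau>0) / \<rho>" using rho by (simp add: w_def norm_divide)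
      moreover have "(c - R) / \<rho> \<le> cmod (\<zeta> - \<tau>0) / \<rho>" using far rho by (intro divide_right_mono) auto
      moreover have "4/3 \<le> (c - R) / \<rho>" using R rho by (simp add: \<rho>_def field_simps)
      ultimately show ?thesis by linarith
    qed
    have wN: "cmod (w \<zeta> ^ N) \<ge> 1/e"
      using power_mono[of "4/3" "cmod (w \<zeta>)" N] wz p43 by (simp add: norm_power)
    have e4: "1/e \<ge> 4" using e by (simp add: field_simps)
    have den: "cmod (w \<zeta> ^ N + 1) \<ge> 1/(2*e)"
    proof -
      have "cmod (w \<zeta> ^ N) \<le> cmod (w \<zeta> ^ N + 1) + 1"
        using norm_triangle_ineq4[of "w \<zeta> ^ N + 1" 1] by simp
      moreover have "1/(2*e) = 1/e - 1/(2*e)" using e by (simp add: field_simps)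
      moreover have "1/(2*e) \<ge> 1" using e by (simp add: field_simps)
      ultimately show ?thesis using wN by linarith
    qed
    have dpos: "1/(2*e) > 0" using e by simp
    have "cmod (1 / (w \<zeta> ^ N - (-1))) = 1 / cmod (w \<zeta> ^ N + 1)" by (simp add: norm_divide)
    also have "\<dots> \<le> 1 / (1/(2*e))"
    proof -
      have "cmod (w \<zeta> ^ N + 1) > 0" using den dpos by linarith
      then show ?thesis using den dpos by (intro divide_left_mono) (auto intro: mult_pos_pos)
    qed
    also have "\<dots> \<le> \<eta>/2" using e by simp
    finally have h1: "cmod (1 / (w \<zeta> ^ N - (-1))) \<le> \<eta>/2" .
    have "cmod (q \<zeta>) \<le> cmod (q \<zeta> - 1 / (w \<zeta> ^ N - (-1))) + cmod (1 / (w \<zeta> ^ N - (-1)))"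
      by (metis diff_add_cancel norm_triangle_ineq)
    moreover have "cmod (q \<zeta> - 1 / (w \<zeta> ^ N - (-1))) \<le> \<eta>/2" using q(2) z(1) by (metis norm_minus_commute)
    ultimately show ?thesis using h1 by linarith
  qed
  show ?thesis using q(1) own other by blast
qed

lemma infdist_lessE:
  assumes "A \<noteq> {}" "infdist x A < e"
  obtains a where "a \<in> A" "dist x a < e"
proof -
  have "Inf ((\<lambda>a. dist x a) ` A) < e" using assms by (simp add: infdist_def)
  then obtain y where "y \<in> (\<lambda>a. dist x a) ` A" "y < e" using cInf_lessD[of "(\<lambda>a. dist x a) ` A" e] assms(1) by auto
  then show ?thesis using that by auto
qed

lemma sup_bound:
  assumes "compact K" "continuous_on K f"
  shows "\<exists>M\<ge>0. \<forall>q\<in>K. cmod (f q :: complex) \<le> M"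
proof -
  have "bounded (f ` K)" using compact_imp_bounded[OF compact_continuous_image[OF assms(2) assms(1)]] .
  then obtain M where "\<forall>x\<in>f ` K. norm x \<le> M" by (auto simp: bounded_iff)
  then show ?thesis by (intro exI[of _ "\<bar>M\<bar>"]) auto
qed

lemma hull_le:
  assumes "p \<in> poly_hull K" "pf f" "K \<noteq> {}" "\<forall>q\<in>K. cmod (f q) \<le> \<beta>"
  shows "cmod (f p) \<le> \<beta>"
proof -
  have "cmod (f p) \<le> (SUP q\<in>K. cmod (f q))" using assms(1,3) pf_poly2[OF assms(2)] by (auto simp: poly_hull_def)
  also have "\<dots> \<le> \<beta>" using assms(3,4) by (intro cSUP_least) auto
  finally show ?thesis .
qed

lemma open_Bidisk: "open Bidisk"
proof -
  have "Bidisk = {p. cmod (fst p) < 1/2} \<inter> {p. cmod (snd p) < 1}" by (auto simp: Bidisk_def)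
  moreover have "open {p::complex\<times>complex. cmod (fst p) < 1/2}"
    by (rule open_Collect_less) (auto intro!: continuous_intros)
  moreover have "open {p::complex\<times>complex. cmod (snd p) < 1}"
    by (rule open_Collect_less) (auto intro!: continuous_intros)
  ultimately show ?thesis by (metis open_Int)
qed

context cons begin

lemma open_Xns: "open (Xns a r m n s)"
proof -
  have "Xns a r m n s = Bidisk \<inter> {p. cmod (P n s p) < \<delta> n}" by (auto simp: Xns_def)
  moreover have "open {p. cmod (P n s p) < \<delta> n}"
    by (rule open_Collect_less) (auto intro!: continuous_intros cont_P)
  ultimately show ?thesis using open_Bidisk by auto
qed

lemma piece_compact:
  assumes K: "compact K" "K \<subseteq> Xn a r m n" and s: "s \<in> S_set r m n"
  shows "compact (K \<inter> Xns a r m n s)"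
proof -
  define U where "U = \<Union>{Xns a r m n s' | s'. s' \<in> S_set r m n \<and> \<not> (\<forall>k\<in>{1..n}. s k = s' k)}"
  have oU: "open U" unfolding U_def using open_Xns by auto
  have "K \<inter> Xns a r m n s = K \<inter> (- U)"
  proof
    show "K \<inter> Xns a r m n s \<subseteq> K \<inter> - U"
      unfolding U_def using Xns_disj s by fastforce
    show "K \<inter> - U \<subseteq> K \<inter> Xns a r m n s"
    proof
      fix q assume q: "q \<in> K \<inter> - U"
      then obtain s' where s': "s' \<in> S_set r m n" "q \<in> Xns a r m n s'" using K(2) by (auto simp: Xn_def)
      show "q \<in> K \<inter> Xns a r m n s"
      proof (cases "\<forall>k\<in>{1..n}. s k = s' k")
        case True then show ?thesis using Xns_cong[OF True] s' q by auto
      next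
        case False then have "q \<in> U" unfolding U_def using s' by blast
        then show ?thesis using q by auto
      qed
    qed
  qed
  moreover have "closed (- U)" using oU by auto
  ultimately show ?thesis using K(1) by (simp add: compact_Int_closed)
qed

abbreviation "cc n \<equiv> 3 * \<delta> n / real (m (Suc n))"
abbreviation "uu n \<equiv> \<delta> n / real (m (Suc n))"

lemma uu_pos: "uu n > 0" using delta_pos[of n] mS[of n] by simp
lemma cc_uu: "cc n = 3 * uu n" by simp

lemma branch_F1:
  assumes s: "s \<in> S_set r m n" and q: "q \<in> Xns a r m n s" "q \<in> Xn a r m (Suc n)"
  shows "\<exists>\<sigma>\<in>Sigma_set r m (Suc n). cmod (P n s q - \<sigma>) < uu n \<and> q \<in> Xns a r m (Suc n) (s(Suc n := \<sigma>))"
proof -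
  obtain s'' where s'': "s'' \<in> S_set r m (Suc n)" "q \<in> Xns a r m (Suc n) s''" using q(2) by (auto simp: Xn_def)
  have s''n: "s'' \<in> S_set r m n" "s'' (Suc n) \<in> Sigma_set r m (Suc n)" using S_set_Suc[OF s''(1)] by auto
  have qn: "q \<in> Xns a r m n s''" using Xns_mono[OF s''(1)] s''(2) by blast
  have ag: "\<forall>k\<in>{1..n}. s k = s'' k" using Xns_disj[OF s s''n(1) q(1) qn] .
  define \<sigma> where "\<sigma> = s'' (Suc n)"
  have ag2: "\<forall>k\<in>{1..Suc n}. (s(Suc n := \<sigma>)) k = s'' k" using ag by (auto simp: \<sigma>_def le_Suc_eq)
  have "q \<in> Xns a r m (Suc n) (s(Suc n := \<sigma>))" by (rule ssubst[OF Xns_cong[OF ag2]]) (rule s''(2))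
  moreover have "cmod (P n s q - \<sigma>) < uu n"
  proof -
    have "q \<in> Bidisk" "cmod (P (Suc n) s'' q) < \<delta> (Suc n)" using s''(2) by (auto simp: Xns_def)
    then have "cmod (P n s'' q - s'' (Suc n)) < uu n" using step_bound by blast
    then show ?thesis using Ppoly_cong[OF ag] by (simp add: \<sigma>_def)
  qed
  ultimately show ?thesis using s''n(2) by (auto simp: \<sigma>_def)
qed

lemma Sigma_S_upd: "s \<in> S_set r m n \<Longrightarrow> \<sigma> \<in> Sigma_set r m (Suc n) \<Longrightarrow> s(Suc n := \<sigma>) \<in> S_set r m (Suc n)"
  by (auto simp: S_set_def le_Suc_eq)

lemma lattice_unique:
  assumes "\<tau> \<in> lattice (cc n)" "\<tau>' \<in> lattice (cc n)" "cmod (x - \<tau>) < 3/2 * uu n" "cmod (x - \<tau>') < 3/2 * uu n"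
  shows "\<tau> = \<tau>'"
proof (rule ccontr)
  assume ne: "\<tau> \<noteq> \<tau>'"
  have cpos: "cc n > 0" using uu_pos[of n] by simp
  have "cc n \<le> cmod (\<tau> - \<tau>')" using lattice_sep[OF cpos assms(1,2) ne] .
  moreover have "cmod (\<tau> - \<tau>') \<le> cmod (x - \<tau>) + cmod (x - \<tau>')"
  proof -
    have "cmod (\<tau> - \<tau>') = cmod ((\<tau> - x) + (x - \<tau>'))" by simp
    also have "\<dots> \<le> cmod (\<tau> - x) + cmod (x - \<tau>')" by (rule norm_triangle_ineq)
    finally show ?thesis by (simp add: norm_minus_commute)
  qed
  ultimately show False using assms(3,4) by simp
qed

lemma branch_R0:
  assumes K: "compact K" "K \<subseteq> Xn a r m (Suc n)" and s: "s \<in> S_set r m n"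
  shows "\<exists>R0. 0 \<le> R0 \<and> R0 < uu n \<and> (\<forall>q\<in>K \<inter> Xns a r m n s. infdist (P n s q) (lattice (cc n)) \<le> R0)"
proof (cases "K \<inter> Xns a r m n s = {}")
  case True then show ?thesis using uu_pos[of n] by (intro exI[of _ 0]) auto
next
  case False
  have Kn: "K \<subseteq> Xn a r m n" using K(2) Xn_mono_Suc by blast
  have cK: "compact (K \<inter> Xns a r m n s)" by (rule piece_compact[OF K(1) Kn s])
  have ct: "continuous_on (K \<inter> Xns a r m n s) (\<lambda>q. infdist (P n s q) (lattice (cc n)))"
    by (intro continuous_intros cont_P)
  obtain q0 where q0: "q0 \<in> K \<inter> Xns a r m n s"
    "\<forall>q\<in>K \<inter> Xns a r m n s. infdist (P n s q) (lattice (cc n)) \<le> infdist (P n s q0) (lattice (cc n))"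
    using continuous_attains_sup[OF cK False ct] by blast
  obtain \<sigma> where \<sigma>: "\<sigma> \<in> Sigma_set r m (Suc n)" "cmod (P n s q0 - \<sigma>) < uu n"
    using branch_F1[OF s] q0(1) K(2) by blast
  have "infdist (P n s q0) (lattice (cc n)) \<le> dist (P n s q0) \<sigma>"
    by (rule infdist_le) (rule Sigma_lattice[OF \<sigma>(1)])
  then have "infdist (P n s q0) (lattice (cc n)) < uu n" using \<sigma>(2) by (simp add: dist_norm)
  then show ?thesis using q0(2) infdist_nonneg by (intro exI[of _ "infdist (P n s q0) (lattice (cc n))"]) auto
qed

lemma lattice_ne: "lattice c \<noteq> {}" using lattice_zero by blast

lemma branch_classify:
  assumes K: "K \<subseteq> Xn a r m (Suc n)" and s: "s \<in> S_set r m n"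
    and R0: "\<forall>q\<in>K \<inter> Xns a r m n s. infdist (P n s q) (lattice (cc n)) \<le> R0"
    and R: "R0 < R" "R < uu n"
    and q: "q \<in> K \<inter> Xns a r m n s"
  shows "\<exists>\<sigma>\<in>Sigma_set r m (Suc n). cmod (P n s q - \<sigma>) \<le> R \<and> q \<in> Xns a r m (Suc n) (s(Suc n := \<sigma>))
          \<and> (\<forall>\<tau>\<in>lattice (cc n). cmod (P n s q - \<tau>) \<le> R \<longrightarrow> \<tau> = \<sigma>)"
proof -
  obtain \<sigma> where \<sigma>: "\<sigma> \<in> Sigma_set r m (Suc n)" "cmod (P n s q - \<sigma>) < uu n" "q \<in> Xns a r m (Suc n) (s(Suc n := \<sigma>))"
    using branch_F1[OF s] q K by blast
  have "infdist (P n s q) (lattice (cc n)) \<le> R0" using R0 q by blast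
  then have "infdist (P n s q) (lattice (cc n)) < R" using R by linarith
  then obtain \<tau> where \<tau>: "\<tau> \<in> lattice (cc n)" "dist (P n s q) \<tau> < R" using infdist_lessE lattice_ne by metis
  have uu: "uu n > 0" by (rule uu_pos)
  have "\<tau> = \<sigma>" by (rule lattice_unique[OF \<tau>(1) Sigma_lattice[OF \<sigma>(1)], of "P n s q"]) (use \<tau>(2) \<sigma>(2) R uu in \<open>auto simp: dist_norm\<close>)
  moreover have "\<forall>\<tau>'\<in>lattice (cc n). cmod (P n s q - \<tau>') \<le> R \<longrightarrow> \<tau>' = \<sigma>"
  proof (intro ballI impI)
    fix \<tau>' assume "\<tau>' \<in> lattice (cc n)" "cmod (P n s q - \<tau>') \<le> R"
    then show "\<tau>' = \<sigma>" using lattice_unique[OF _ Sigma_lattice[OF \<sigma>(1)], of \<tau>' "P n s q"] \<sigma>(2) R uu by auto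
  qed
  ultimately have "cmod (P n s q - \<sigma>) \<le> R" "\<forall>\<tau>'\<in>lattice (cc n). cmod (P n s q - \<tau>') \<le> R \<longrightarrow> \<tau>' = \<sigma>"
    using \<tau>(2) by (auto simp: dist_norm)
  then show ?thesis using \<sigma>(1,3) by blast
qed

end

context cons begin

lemma mid_lemma: "0 \<le> (R0::real) \<Longrightarrow> R0 < U \<Longrightarrow> R0 < (R0 + U)/2 \<and> (R0 + U)/2 < U \<and> 0 \<le> (R0 + U)/2"
  by (simp add: field_simps)

lemma S0: "S_set r m 0 = UNIV" by (auto simp: S_set_def)

lemma Xn0: "Xn a r m 0 = Xns a r m 0 s"
  unfolding Xn_def S0 using Xns_cong[of 0] by auto

lemma Loc:
  "s \<in> S_set r m n \<Longrightarrow> compact K \<Longrightarrow> K \<subseteq> Xn a r m n \<Longrightarrow> \<eta> > 0 \<Longrightarrow>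
   \<exists>H. pf H \<and> (\<forall>q\<in>K \<inter> Xns a r m n s. cmod (H q - 1) \<le> \<eta>) \<and> (\<forall>q\<in>K - Xns a r m n s. cmod (H q) \<le> \<eta>)"
proof (induction n arbitrary: s K \<eta>)
  case 0
  have "K - Xns a r m 0 s = {}" using 0 Xn0[of s] by auto
  then show ?case using "0.prems"(4) by (intro exI[of _ "\<lambda>p. 1"]) (auto intro: pf_const)
next
  case (Suc n)
  note sS = Suc.prems(1) and K = Suc.prems(2,3) and eta = Suc.prems(4)
  have sn: "s \<in> S_set r m n" and \<sigma>S: "s (Suc n) \<in> Sigma_set r m (Suc n)" using S_set_Suc[OF sS] by auto
  define \<sigma> where "\<sigma> = s (Suc n)"
  have Kn: "K \<subseteq> Xn a r m n" using K(2) Xn_mono_Suc by blast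
  obtain R0 where R0: "0 \<le> R0" "R0 < uu n" "\<forall>q\<in>K \<inter> Xns a r m n s. infdist (P n s q) (lattice (cc n)) \<le> R0"
    using branch_R0[OF K sn] by blast
  define R where "R = (R0 + uu n) / 2"
  have R: "R0 < R" "R < uu n" "0 \<le> R" "R < cc n / 3"
  proof -
    have c3: "cc n / 3 = uu n" by simp
    have "R0 < R \<and> R < uu n \<and> 0 \<le> R" unfolding R_def using R0(1,2) by (rule mid_lemma)
    then show "R0 < R" "R < uu n" "0 \<le> R" "R < cc n / 3" unfolding c3 by auto
  qed
  have cpos: "cc n > 0" using uu_pos[of n] by simp
  obtain B where B: "B \<ge> 0" "\<forall>q\<in>K. cmod (P n s q) \<le> B" using sup_bound[OF K(1) cont_P] by blast
  define L where "L = {x. (\<exists>\<tau>\<in>lattice (cc n). cmod (x - \<tau>) \<le> R) \<and> cmod x \<le> B}"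
  have bL: "bounded L" unfolding bounded_iff L_def by blast
  have Lnb: "\<forall>\<zeta>\<in>L. \<exists>\<tau>\<in>lattice (cc n). cmod (\<zeta> - \<tau>) \<le> R" unfolding L_def by blast
  define \<eta>' where "\<eta>' = min 1 (\<eta>/3)"
  have e': "\<eta>' > 0" "\<eta>' \<le> 1" "\<eta>' \<le> \<eta>/3" using eta by (auto simp: \<eta>'_def)
  obtain q1 where q1: "upf q1" "\<forall>\<zeta>\<in>L. cmod (\<zeta> - \<sigma>) \<le> R \<longrightarrow> cmod (q1 \<zeta> - 1) \<le> \<eta>'"
      "\<forall>\<zeta>\<in>L. cmod (\<zeta> - \<sigma>) > R \<longrightarrow> cmod (q1 \<zeta>) \<le> \<eta>'"
    using indicator_approx[OF cpos R(3) R(4) bL Lnb Sigma_lattice[OF \<sigma>S] e'(1)] unfolding \<sigma>_def by blast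
  have pq: "pf (\<lambda>p. q1 (P n s p))" by (rule upf_comp[OF q1(1) pf_P])
  obtain M where M: "M \<ge> 0" "\<forall>q\<in>K. cmod (q1 (P n s q)) \<le> M"
    using sup_bound[OF K(1) pf_cont[OF pq]] by blast
  have eM: "\<eta>' / (M + 1) > 0" using e' M by simp
  obtain H0 where H0: "pf H0" "\<forall>q\<in>K \<inter> Xns a r m n s. cmod (H0 q - 1) \<le> \<eta>' / (M + 1)"
      "\<forall>q\<in>K - Xns a r m n s. cmod (H0 q) \<le> \<eta>' / (M + 1)"
    using Suc.IH[OF sn K(1) Kn eM] by blast
  have eM1: "\<eta>' / (M + 1) \<le> \<eta>'" using e' M by (simp add: field_simps)
  define H where "H p = H0 p * q1 (P n s p)" for p
  have pH: "pf H" unfolding H_def[abs_def] by (rule pf_mult[OF H0(1) pq])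
  have classify: "\<exists>\<sigma>'\<in>Sigma_set r m (Suc n). cmod (P n s q - \<sigma>') \<le> R \<and> q \<in> Xns a r m (Suc n) (s(Suc n := \<sigma>'))
          \<and> (\<forall>\<tau>\<in>lattice (cc n). cmod (P n s q - \<tau>) \<le> R \<longrightarrow> \<tau> = \<sigma>')" if q: "q \<in> K \<inter> Xns a r m n s" for q
    by (rule branch_classify[OF K(2) sn R0(3) R(1) R(2) q])
  have inL: "P n s q \<in> L" if q: "q \<in> K \<inter> Xns a r m n s" for q
  proof -
    obtain \<sigma>' where "\<sigma>' \<in> Sigma_set r m (Suc n)" "cmod (P n s q - \<sigma>') \<le> R" using classify[OF q] by blast
    then show ?thesis using B q Sigma_lattice unfolding L_def by blast
  qed
  have A: "cmod (H q - 1) \<le> \<eta>" if q: "q \<in> K \<inter> Xns a r m (Suc n) s" for q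
  proof -
    have qn: "q \<in> K \<inter> Xns a r m n s" using q Xns_mono[OF sS] by blast
    obtain \<sigma>' where \<sigma>': "\<sigma>' \<in> Sigma_set r m (Suc n)" "cmod (P n s q - \<sigma>') \<le> R" "q \<in> Xns a r m (Suc n) (s(Suc n := \<sigma>'))"
      using classify[OF qn] by blast
    have "\<forall>k\<in>{1..Suc n}. s k = (s(Suc n := \<sigma>')) k"
      using Xns_disj[OF sS Sigma_S_upd[OF sn \<sigma>'(1)]] q \<sigma>'(3) by blast
    then have "s (Suc n) = (s(Suc n := \<sigma>')) (Suc n)" 
      by (rule bspec) simp
    then have "\<sigma>' = \<sigma>" by (simp add: \<sigma>_def)
    then have "cmod (q1 (P n s q) - 1) \<le> \<eta>'" using q1(2) inL[OF qn] \<sigma>'(2) by blast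
    moreover have h0: "cmod (H0 q - 1) \<le> \<eta>'" using H0(2)[rule_format, OF qn] eM1 by linarith
    ultimately have qb: "cmod (q1 (P n s q)) \<le> 2"
      using norm_triangle_ineq2[of "q1 (P n s q)" 1] e' by simp
    have "H q - 1 = (H0 q - 1) * q1 (P n s q) + (q1 (P n s q) - 1)" by (simp add: H_def algebra_simps)
    then have "cmod (H q - 1) \<le> cmod (H0 q - 1) * cmod (q1 (P n s q)) + cmod (q1 (P n s q) - 1)"
      by (metis norm_mult norm_triangle_ineq)
    also have "\<dots> \<le> \<eta>' * 2 + \<eta>'"
      using h0 qb \<open>cmod (q1 (P n s q) - 1) \<le> \<eta>'\<close> e' by (intro add_mono mult_mono) auto
    finally show ?thesis using e' by linarith
  qed
  have B': "cmod (H q) \<le> \<eta>" if q: "q \<in> K - Xns a r m (Suc n) s" for q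
  proof (cases "q \<in> Xns a r m n s")
    case True
    then have qn: "q \<in> K \<inter> Xns a r m n s" using q by blast
    obtain \<sigma>' where \<sigma>': "\<sigma>' \<in> Sigma_set r m (Suc n)" "cmod (P n s q - \<sigma>') \<le> R" "q \<in> Xns a r m (Suc n) (s(Suc n := \<sigma>'))"
      "\<forall>\<tau>\<in>lattice (cc n). cmod (P n s q - \<tau>) \<le> R \<longrightarrow> \<tau> = \<sigma>'"
      using classify[OF qn] by blast
    have "\<sigma>' \<noteq> \<sigma>"
    proof
      assume "\<sigma>' = \<sigma>"
      then have "s(Suc n := \<sigma>') = s" by (simp add: \<sigma>_def)
      then show False using \<sigma>'(3) q by simp
    qed
    then have "cmod (P n s q - \<sigma>) > R" using \<sigma>'(4) Sigma_lattice[OF \<sigma>S] unfolding \<sigma>_def by force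
    then have q1b: "cmod (q1 (P n s q)) \<le> \<eta>'" using q1(3) inL[OF qn] by blast
    have "cmod (H0 q - 1) \<le> \<eta>'" using H0(2)[rule_format, OF qn] eM1 by linarith
    then have h0: "cmod (H0 q) \<le> 2" using norm_triangle_ineq2[of "H0 q" 1] e' by simp
    have "cmod (H q) = cmod (H0 q) * cmod (q1 (P n s q))" by (simp add: H_def norm_mult)
    also have "\<dots> \<le> 2 * \<eta>'" using h0 q1b by (intro mult_mono) auto
    finally show ?thesis using e' by linarith
  next
    case False
    then have qn: "q \<in> K - Xns a r m n s" using q by blast
    have h0: "cmod (H0 q) \<le> \<eta>' / (M + 1)" using H0(3) qn by blast
    have "cmod (H q) = cmod (H0 q) * cmod (q1 (P n s q))" by (simp add: H_def norm_mult)
    also have "\<dots> \<le> \<eta>' / (M + 1) * M" using h0 M q eM by (intro mult_mono) auto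
    also have "\<dots> \<le> \<eta>'" using M e' by (simp add: field_simps)
    finally show ?thesis using e' by linarith
  qed
  show ?case using pH A B' by blast
qed

end

lemma near1: "cmod (x - 1) \<le> 1/4 \<Longrightarrow> cmod x \<le> 5/4 \<and> cmod x \<ge> 3/4"
  using norm_triangle_ineq2[of x 1] norm_triangle_ineq3[of x 1] by auto

lemma near1': "cmod (x - 1) \<le> e \<Longrightarrow> cmod x \<le> 1 + e"
  using norm_triangle_ineq2[of x 1] by auto

lemma R_choice: "0 \<le> R0 \<Longrightarrow> R0 < (U::real) \<Longrightarrow> 0 \<le> dp \<Longrightarrow>
    R = (if dp < U then (max R0 dp + U)/2 else (R0 + U)/2) \<Longrightarrow> R0 < R \<and> R < U \<and> 0 \<le> R \<and> (dp < U \<longrightarrow> dp \<le> R)"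
  by (auto simp: max_def field_simps)

lemma frac_helper: "0 \<le> X \<Longrightarrow> 0 \<le> Y \<Longrightarrow> 0 < k \<Longrightarrow> Y / (k * (X + 1)) * X \<le> Y / (k::real)"
proof -
  assume X: "0 \<le> X" and Y: "0 \<le> Y" and k: "0 < k"
  have "Y / (k * (X + 1)) * X = (Y / k) * (X / (X + 1))" using X k by (simp add: field_simps)
  also have "\<dots> \<le> (Y / k) * 1" using X Y k by (intro mult_left_mono) auto
  finally show ?thesis by simp
qed

context cons begin

lemma contra:
  assumes p: "p \<in> poly_hull K" and Kne: "K \<noteq> {}" and pH: "pf H" and pG: "pf G0"
    and Hp: "cmod (H p - 1) \<le> 1/4" and Gp: "cmod (G0 p) \<ge> \<gamma>"
    and bd: "\<forall>q\<in>K. cmod (H q) * cmod (G0 q) \<le> \<beta>" and lt: "\<beta> < 3/4 * \<gamma>"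
  shows False
proof -
  have "cmod (H p * G0 p) \<le> \<beta>"
    by (rule hull_le[OF p pf_mult[OF pH pG] Kne]) (use bd in \<open>simp add: norm_mult\<close>)
  moreover have "cmod (H p * G0 p) \<ge> 3/4 * \<gamma>"
  proof (cases "\<gamma> \<le> 0")
    case True then show ?thesis using norm_ge_zero[of "H p * G0 p"] by linarith
  next
    case False
    have h: "cmod (H p) \<ge> 3/4" using near1[OF Hp] by simp
    have "3/4 * \<gamma> \<le> cmod (H p) * \<gamma>" using h False by (intro mult_right_mono) auto
    also have "\<dots> \<le> cmod (H p) * cmod (G0 p)" using Gp by (intro mult_left_mono) auto
    finally show ?thesis by (simp add: norm_mult)
  qed
  ultimately show False using lt by linarith
qed

lemma hull_sub_Xn:
  assumes K: "compact K" "K \<subseteq> Xlim a r m" and p: "p \<in> poly_hull K"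
  shows "p \<in> Xn a r m n"
proof -
  have Kne: "K \<noteq> {}" using p by (auto simp: poly_hull_def)
  have KX: "K \<subseteq> Xn a r m k" for k using K(2) by (auto simp: Xlim_def)
  show ?thesis
  proof (induction n)
    case 0
    define s0 :: "nat \<Rightarrow> complex" where "s0 = (\<lambda>k. 0)"
    have K0: "K \<subseteq> Xns a r m 0 s0" using KX[of 0] Xn0[of s0] by simp
    have cf: "continuous_on K (\<lambda>q. cmod (fst q))" by (intro continuous_intros)
    have cs: "continuous_on K (\<lambda>q. cmod (snd q))" by (intro continuous_intros)
    obtain q1 where q1: "q1 \<in> K" "\<forall>y\<in>K. cmod (fst y) \<le> cmod (fst q1)"
      using continuous_attains_sup[OF K(1) Kne cf] by blast
    obtain q2 where q2: "q2 \<in> K" "\<forall>y\<in>K. cmod (snd y) \<le> cmod (snd q2)"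
      using continuous_attains_sup[OF K(1) Kne cs] by blast
    have "cmod (fst p) \<le> cmod (fst q1)" by (rule hull_le[OF p pf_fst Kne q1(2)])
    moreover have "cmod (fst q1) < 1/2" using K0 q1(1) by (auto simp: Xns_def Bidisk_def)
    moreover have "cmod (snd p) \<le> cmod (snd q2)" by (rule hull_le[OF p pf_snd Kne q2(2)])
    moreover have "cmod (snd q2) < 1/2" using K0 q2(1) by (auto simp: Xns_def)
    ultimately have "p \<in> Xns a r m 0 s0" by (cases p) (auto simp: Xns_def Bidisk_def)
    then show ?case using Xn0[of s0] by simp
  next
    case (Suc n)
    show ?case
    proof (rule ccontr)
      assume pnot: "p \<notin> Xn a r m (Suc n)"
      obtain s where s: "s \<in> S_set r m n" "p \<in> Xns a r m n s" using Suc.IH by (auto simp: Xn_def)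
      have pB: "p \<in> Bidisk" using s(2) by (simp add: Xns_def)
      define K' where "K' = insert p K"
      have K': "compact K'" "K' \<subseteq> Xn a r m n" using K(1) KX[of n] Suc.IH by (auto simp: K'_def)
      have KS: "K \<subseteq> Xn a r m (Suc n)" by (rule KX)
      obtain R0 where R0: "0 \<le> R0" "R0 < uu n" "\<forall>q\<in>K \<inter> Xns a r m n s. infdist (P n s q) (lattice (cc n)) \<le> R0"
        using branch_R0[OF K(1) KS s(1)] by blast
      have cpos: "cc n > 0" using uu_pos[of n] by simp
      have u0: "uu n > 0" by (rule uu_pos)
      obtain \<tau>p where \<tau>p: "\<tau>p \<in> lattice (cc n)" "\<forall>\<sigma>\<in>lattice (cc n). cmod (P n s p - \<tau>p) \<le> cmod (P n s p - \<sigma>)"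
        using nearest[OF cpos, of "P n s p"] by blast
      define dp where "dp = cmod (P n s p - \<tau>p)"
      define R where "R = (if dp < uu n then (max R0 dp + uu n) / 2 else (R0 + uu n) / 2)"
      have RR: "R0 < R \<and> R < uu n \<and> 0 \<le> R \<and> (dp < uu n \<longrightarrow> dp \<le> R)"
        by (rule R_choice[OF R0(1) R0(2) _ R_def]) (simp add: dp_def)
      then have R: "R0 < R" "R < uu n" "0 \<le> R" "dp < uu n \<Longrightarrow> dp \<le> R" by auto
      have c3: "cc n / 3 = uu n" by simp
      have R4: "R < cc n / 3" using R(2) c3 by simp
      obtain B where B: "B \<ge> 0" "\<forall>q\<in>K'. cmod (P n s q) \<le> B" using sup_bound[OF K'(1) cont_P] by blast
      define L where "L = {x. (\<exists>\<tau>\<in>lattice (cc n). cmod (x - \<tau>) \<le> R) \<and> cmod x \<le> B}"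
      have bL: "bounded L" unfolding bounded_iff L_def by blast
      have Lnb: "\<forall>\<zeta>\<in>L. \<exists>\<tau>\<in>lattice (cc n). cmod (\<zeta> - \<tau>) \<le> R" unfolding L_def by blast
      have classify: "\<exists>\<sigma>'\<in>Sigma_set r m (Suc n). cmod (P n s q - \<sigma>') \<le> R \<and> q \<in> Xns a r m (Suc n) (s(Suc n := \<sigma>'))
          \<and> (\<forall>\<tau>\<in>lattice (cc n). cmod (P n s q - \<tau>) \<le> R \<longrightarrow> \<tau> = \<sigma>')" if q: "q \<in> K \<inter> Xns a r m n s" for q
        by (rule branch_classify[OF KS s(1) R0(3) R(1) R(2) q])
      have inL: "P n s q \<in> L" if q: "q \<in> K \<inter> Xns a r m n s" for q
      proof -
        obtain \<sigma>' where "\<sigma>' \<in> Sigma_set r m (Suc n)" "cmod (P n s q - \<sigma>') \<le> R" using classify[OF q] by blast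
        then show ?thesis using B q Sigma_lattice unfolding L_def K'_def by blast
      qed
      have pK': "p \<in> K'" "p \<in> Xns a r m n s" using s(2) by (auto simp: K'_def)
      have Loc': "\<exists>H. pf H \<and> cmod (H p - 1) \<le> e \<and> (\<forall>q\<in>K \<inter> Xns a r m n s. cmod (H q - 1) \<le> e)
                    \<and> (\<forall>q\<in>K - Xns a r m n s. cmod (H q) \<le> e)" if e: "e > 0" for e
        using Loc[OF s(1) K'(1) K'(2) e] pK' unfolding K'_def by blast
      show False
      proof (cases "dp < uu n")
        case False
        have hb: "\<forall>\<tau>\<in>lattice (cc n). cmod (P n s p - \<tau>) \<ge> R + (uu n - R)"
          using \<tau>p(2) False unfolding dp_def by fastforce
        have Ainv: "approx L (\<lambda>x. 1 / (x - P n s p))"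
          by (rule escape[OF cpos R(3) _ _ bL Lnb hb]) (use R u0 in auto)
        define \<eta>' where "\<eta>' = 1 / (8 * (2 * B + 1))"
        have e': "\<eta>' > 0" using B by (simp add: \<eta>'_def)
        obtain g where g: "upf g" "\<forall>x\<in>L. cmod (1 / (x - P n s p) - g x) \<le> \<eta>'"
          using Ainv e' unfolding approx_def by blast
        define G0 where "G0 q = 1 - (P n s q - P n s p) * g (P n s q)" for q
        have pG: "pf G0" unfolding G0_def[abs_def]
          by (intro pf_diff pf_mult pf_const pf_P upf_comp[OF g(1) pf_P])
        obtain M where M: "M \<ge> 0" "\<forall>q\<in>K. cmod (G0 q) \<le> M" using sup_bound[OF K(1) pf_cont[OF pG]] by blast
        define e where "e = min (1/4) (1 / (4 * (M + 1)))"
        have e: "e > 0" "e \<le> 1/4" "e * M \<le> 1/4"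
        proof -
          show "e > 0" "e \<le> 1/4" using M by (auto simp: e_def)
          have "e * M \<le> 1 / (4 * (M + 1)) * M" using M by (intro mult_right_mono) (auto simp: e_def)
          also have "\<dots> \<le> 1/4" using M by (simp add: field_simps)
          finally show "e * M \<le> 1/4" .
        qed
        obtain H where H: "pf H" "cmod (H p - 1) \<le> e" "\<forall>q\<in>K \<inter> Xns a r m n s. cmod (H q - 1) \<le> e"
            "\<forall>q\<in>K - Xns a r m n s. cmod (H q) \<le> e" using Loc'[OF e(1)] by blast
        have bd: "\<forall>q\<in>K. cmod (H q) * cmod (G0 q) \<le> 1/4"
        proof
          fix q assume qK: "q \<in> K"
          show "cmod (H q) * cmod (G0 q) \<le> 1/4"
          proof (cases "q \<in> Xns a r m n s")
            case True
            then have qn: "q \<in> K \<inter> Xns a r m n s" using qK by blast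
            have "cmod (H q - 1) \<le> 1/4" using H(3)[rule_format, OF qn] e by linarith
            then have Hq: "cmod (H q) \<le> 5/4" using near1 by blast
            have zL: "P n s q \<in> L" by (rule inL[OF qn])
            obtain \<tau> where \<tau>: "\<tau> \<in> lattice (cc n)" "cmod (P n s q - \<tau>) \<le> R" using Lnb zL by blast
            have ne: "P n s q - P n s p \<noteq> 0"
            proof
              assume "P n s q - P n s p = 0"
              then have "cmod (P n s p - \<tau>) \<le> R" using \<tau>(2) by simp
              moreover have "cmod (P n s p - \<tau>) \<ge> uu n" using hb \<tau>(1) by auto
              ultimately show False using R by linarith
            qed
            have "G0 q = (P n s q - P n s p) * (1 / (P n s q - P n s p) - g (P n s q))"
              using ne by (simp add: G0_def field_simps)
            then have "cmod (G0 q) \<le> cmod (P n s q - P n s p) * \<eta>'"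
              using g(2) zL ne by (simp add: norm_mult mult_left_mono)
            also have "\<dots> \<le> (2 * B + 1) * \<eta>'"
            proof -
              have "cmod (P n s q - P n s p) \<le> cmod (P n s q) + cmod (P n s p)" by (rule norm_triangle_ineq4)
              also have "\<dots> \<le> 2 * B" using B qK pK' by (auto simp: K'_def)
              finally show ?thesis using e' by (intro mult_right_mono) auto
            qed
            also have "\<dots> = 1/8" using B by (simp add: \<eta>'_def)
            finally have "cmod (G0 q) \<le> 1/8" .
            then have "cmod (H q) * cmod (G0 q) \<le> 5/4 * (1/8)" using Hq by (intro mult_mono) auto
            then show ?thesis by simp
          next
            case False
            then have "cmod (H q) \<le> e" using H(4) qK by blast
            then have "cmod (H q) * cmod (G0 q) \<le> e * M" using M qK e(1) by (intro mult_mono) auto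
            then show ?thesis using e by linarith
          qed
        qed
        have Gp: "cmod (G0 p) \<ge> 1" by (simp add: G0_def)
        show False by (rule contra[OF p Kne H(1) pG _ Gp bd]) (use H(2) e in auto)
      next
        case True
        have dR: "cmod (P n s p - \<tau>p) \<le> R" using R(4)[OF True] by (simp add: dp_def)
        have pL: "P n s p \<in> L" using dR \<tau>p(1) B pK' unfolding L_def by blast
        show False
        proof (cases "\<tau>p \<in> Sigma_set r m (Suc n)")
          case False
          obtain q1 where q1: "upf q1" "\<forall>\<zeta>\<in>L. cmod (\<zeta> - \<tau>p) \<le> R \<longrightarrow> cmod (q1 \<zeta> - 1) \<le> 1/8"
              "\<forall>\<zeta>\<in>L. cmod (\<zeta> - \<tau>p) > R \<longrightarrow> cmod (q1 \<zeta>) \<le> 1/8"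
            using indicator_approx[OF cpos R(3) R4 bL Lnb \<tau>p(1), of "1/8"] by auto
          define G0 where "G0 q = q1 (P n s q)" for q
          have pG: "pf G0" unfolding G0_def[abs_def] by (rule upf_comp[OF q1(1) pf_P])
          obtain M where M: "M \<ge> 0" "\<forall>q\<in>K. cmod (G0 q) \<le> M" using sup_bound[OF K(1) pf_cont[OF pG]] by blast
          define e where "e = min (1/4) (1 / (4 * (M + 1)))"
          have e: "e > 0" "e \<le> 1/4" "e * M \<le> 1/4"
          proof -
            show "e > 0" "e \<le> 1/4" using M by (auto simp: e_def)
            have "e * M \<le> 1 / (4 * (M + 1)) * M" using M by (intro mult_right_mono) (auto simp: e_def)
            also have "\<dots> \<le> 1/4" using M by (simp add: field_simps)
            finally show "e * M \<le> 1/4" .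
          qed
          obtain H where H: "pf H" "cmod (H p - 1) \<le> e" "\<forall>q\<in>K \<inter> Xns a r m n s. cmod (H q - 1) \<le> e"
              "\<forall>q\<in>K - Xns a r m n s. cmod (H q) \<le> e" using Loc'[OF e(1)] by blast
          have bd: "\<forall>q\<in>K. cmod (H q) * cmod (G0 q) \<le> 1/4"
          proof
            fix q assume qK: "q \<in> K"
            show "cmod (H q) * cmod (G0 q) \<le> 1/4"
            proof (cases "q \<in> Xns a r m n s")
              case True
              then have qn: "q \<in> K \<inter> Xns a r m n s" using qK by blast
              have "cmod (H q - 1) \<le> 1/4" using H(3)[rule_format, OF qn] e by linarith
            then have Hq: "cmod (H q) \<le> 5/4" using near1 by blast
              obtain \<sigma>' where \<sigma>': "\<sigma>' \<in> Sigma_set r m (Suc n)" "cmod (P n s q - \<sigma>') \<le> R"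
                "\<forall>\<tau>\<in>lattice (cc n). cmod (P n s q - \<tau>) \<le> R \<longrightarrow> \<tau> = \<sigma>'" using classify[OF qn] by blast
              have "\<tau>p \<noteq> \<sigma>'" using False \<sigma>'(1) by auto
              then have "cmod (P n s q - \<tau>p) > R" using \<sigma>'(3) \<tau>p(1) by force
              then have "cmod (G0 q) \<le> 1/8" using q1(3) inL[OF qn] by (simp add: G0_def)
              then have "cmod (H q) * cmod (G0 q) \<le> 5/4 * (1/8)" using Hq by (intro mult_mono) auto
              then show ?thesis by simp
            next
              case False
              then have "cmod (H q) \<le> e" using H(4) qK by blast
              then have "cmod (H q) * cmod (G0 q) \<le> e * M" using M qK e(1) by (intro mult_mono) auto
              then show ?thesis using e by linarith
            qed
          qed
          have "cmod (G0 p - 1) \<le> 1/8" using q1(2) pL dR by (simp add: G0_def)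
          then have Gp: "cmod (G0 p) \<ge> 7/8" using norm_triangle_ineq3[of "G0 p" 1] by simp
          show False by (rule contra[OF p Kne H(1) pG _ Gp bd]) (use H(2) e in auto)
        next
          case True
          define \<sigma> where "\<sigma> = \<tau>p"
          have \<sigma>S: "\<sigma> \<in> Sigma_set r m (Suc n)" using True by (simp add: \<sigma>_def)
          define s' where "s' = s(Suc n := \<sigma>)"
          have s'S: "s' \<in> S_set r m (Suc n)" unfolding s'_def by (rule Sigma_S_upd[OF s(1) \<sigma>S])
          define D where "D = \<delta> (Suc n)"
          have D: "D > 0" unfolding D_def by (rule delta_pos)
          have pP: "cmod (P (Suc n) s' p) \<ge> D"
          proof (rule ccontr)
            assume "\<not> ?thesis"
            then have "p \<in> Xns a r m (Suc n) s'" using pB by (simp add: Xns_def D_def)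
            then show False using pnot s'S by (auto simp: Xn_def)
          qed
          have cK'': "compact (K \<inter> Xns a r m (Suc n) s')" by (rule piece_compact[OF K(1) KS s'S])
          obtain \<beta>0 where \<beta>0: "0 \<le> \<beta>0" "\<beta>0 < D" "\<forall>q\<in>K \<inter> Xns a r m (Suc n) s'. cmod (P (Suc n) s' q) \<le> \<beta>0"
          proof (cases "K \<inter> Xns a r m (Suc n) s' = {}")
            case True then show ?thesis using that[of 0] D by auto
          next
            case False
            have cP: "continuous_on (K \<inter> Xns a r m (Suc n) s') (\<lambda>q. cmod (P (Suc n) s' q))"
              by (intro continuous_intros cont_P)
            obtain q0 where q0: "q0 \<in> K \<inter> Xns a r m (Suc n) s'"
              "\<forall>y\<in>K \<inter> Xns a r m (Suc n) s'. cmod (P (Suc n) s' y) \<le> cmod (P (Suc n) s' q0)"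
              using continuous_attains_sup[OF cK'' False cP] by blast
            have "cmod (P (Suc n) s' q0) < D" using q0(1) by (simp add: Xns_def D_def)
            then show ?thesis using that[of "cmod (P (Suc n) s' q0)"] q0(2) by auto
          qed
          obtain N where N: "(\<beta>0 / D)^N < 1/16" using real_arch_pow_inv[of "1/16" "\<beta>0 / D"] \<beta>0 D by auto
          have bN: "\<beta>0^N \<le> D^N / 16"
          proof -
            have "(\<beta>0 / D)^N = \<beta>0^N / D^N" by (simp add: power_divide)
            then show ?thesis using N D by (simp add: field_simps)
          qed
          have DN: "D^N > 0" using D by simp
          obtain M1 where M1: "M1 \<ge> 0" "\<forall>q\<in>K. cmod (P (Suc n) s' q) \<le> M1" using sup_bound[OF K(1) cont_P] by blast
          define \<eta>' where "\<eta>' = min (1/4) (D^N / (10 * (M1^N + 1)))"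
          have M1N: "M1^N \<ge> 0" using M1 by simp
          have "D^N / (10 * (M1^N + 1)) > 0" using DN M1N by simp
          then have e': "\<eta>' > 0" "\<eta>' \<le> 1/4" unfolding \<eta>'_def by (auto simp del: divide_const_simps)
          have e'2: "5/4 * \<eta>' * M1^N \<le> D^N / 8"
          proof -
            have "\<eta>' * M1^N \<le> D^N / (10 * (M1^N + 1)) * M1^N" using M1 by (intro mult_right_mono) (auto simp: \<eta>'_def)
            also have "\<dots> \<le> D^N / 10" using M1N DN by (intro frac_helper) auto
            finally show ?thesis by simp
          qed
          obtain q1 where q1: "upf q1" "\<forall>\<zeta>\<in>L. cmod (\<zeta> - \<sigma>) \<le> R \<longrightarrow> cmod (q1 \<zeta> - 1) \<le> \<eta>'"
              "\<forall>\<zeta>\<in>L. cmod (\<zeta> - \<sigma>) > R \<longrightarrow> cmod (q1 \<zeta>) \<le> \<eta>'"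
            using indicator_approx[OF cpos R(3) R4 bL Lnb \<tau>p(1) e'(1)] unfolding \<sigma>_def by blast
          have q1L: "cmod (q1 \<zeta>) \<le> 5/4" if "\<zeta> \<in> L" for \<zeta>
          proof (cases "cmod (\<zeta> - \<sigma>) \<le> R")
            case True then show ?thesis using q1(2) that near1'[of "q1 \<zeta>" \<eta>'] e' by fastforce
          next
            case False then show ?thesis using q1(3) that e' by fastforce
          qed
          define G0 where "G0 q = q1 (P n s q) * P (Suc n) s' q ^ N" for q
          have pG: "pf G0" unfolding G0_def[abs_def] by (intro pf_mult pf_power upf_comp[OF q1(1) pf_P] pf_P)
          obtain M where M: "M \<ge> 0" "\<forall>q\<in>K. cmod (G0 q) \<le> M" using sup_bound[OF K(1) pf_cont[OF pG]] by blast
          define e where "e = min (1/4) (D^N / (8 * (M + 1)))"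
          have e: "e > 0" "e \<le> 1/4" "e * M \<le> D^N / 8"
          proof -
            have "D^N / (8 * (M + 1)) > 0" using M DN by simp
            then show "e > 0" "e \<le> 1/4" unfolding e_def by (auto simp del: divide_const_simps)
            have "e * M \<le> D^N / (8 * (M + 1)) * M" using M by (intro mult_right_mono) (auto simp: e_def)
            also have "\<dots> \<le> D^N / 8" using M DN by (intro frac_helper) auto
            finally show "e * M \<le> D^N / 8" .
          qed
          obtain H where H: "pf H" "cmod (H p - 1) \<le> e" "\<forall>q\<in>K \<inter> Xns a r m n s. cmod (H q - 1) \<le> e"
              "\<forall>q\<in>K - Xns a r m n s. cmod (H q) \<le> e" using Loc'[OF e(1)] by blast
          have bd: "\<forall>q\<in>K. cmod (H q) * cmod (G0 q) \<le> D^N / 8"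
          proof
            fix q assume qK: "q \<in> K"
            show "cmod (H q) * cmod (G0 q) \<le> D^N / 8"
            proof (cases "q \<in> Xns a r m n s")
              case True
              then have qn: "q \<in> K \<inter> Xns a r m n s" using qK by blast
              have "cmod (H q - 1) \<le> 1/4" using H(3)[rule_format, OF qn] e by linarith
            then have Hq: "cmod (H q) \<le> 5/4" using near1 by blast
              have Gq: "cmod (G0 q) = cmod (q1 (P n s q)) * cmod (P (Suc n) s' q) ^ N"
                by (simp add: G0_def norm_mult norm_power)
              show ?thesis
              proof (cases "q \<in> Xns a r m (Suc n) s'")
                case True
                have "cmod (P (Suc n) s' q) \<le> \<beta>0" using \<beta>0(3) qK True by blast
                then have "cmod (P (Suc n) s' q) ^ N \<le> \<beta>0 ^ N" by (intro power_mono) auto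
                then have "cmod (P (Suc n) s' q) ^ N \<le> D^N / 16" using bN by linarith
                then have "cmod (G0 q) \<le> 5/4 * (D^N / 16)" unfolding Gq using q1L[OF inL[OF qn]]
                  by (intro mult_mono) auto
                then have "cmod (H q) * cmod (G0 q) \<le> 5/4 * (5/4 * (D^N / 16))" using Hq by (intro mult_mono) auto
                then show ?thesis using DN by simp
              next
                case False
                obtain \<sigma>' where \<sigma>': "\<sigma>' \<in> Sigma_set r m (Suc n)" "cmod (P n s q - \<sigma>') \<le> R"
                  "q \<in> Xns a r m (Suc n) (s(Suc n := \<sigma>'))"
                  "\<forall>\<tau>\<in>lattice (cc n). cmod (P n s q - \<tau>) \<le> R \<longrightarrow> \<tau> = \<sigma>'" using classify[OF qn] by blast
                have "\<sigma> \<noteq> \<sigma>'" using False \<sigma>'(3) by (auto simp: s'_def)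
                then have "cmod (P n s q - \<sigma>) > R" using \<sigma>'(4) \<tau>p(1) unfolding \<sigma>_def by force
                then have q1s: "cmod (q1 (P n s q)) \<le> \<eta>'" using q1(3) inL[OF qn] by blast
                have "cmod (P (Suc n) s' q) ^ N \<le> M1 ^ N" using M1 qK by (intro power_mono) auto
                then have "cmod (G0 q) \<le> \<eta>' * M1 ^ N" unfolding Gq using q1s e' by (intro mult_mono) auto
                then have "cmod (H q) * cmod (G0 q) \<le> 5/4 * (\<eta>' * M1 ^ N)" using Hq by (intro mult_mono) auto
                then show ?thesis using e'2 by simp
              qed
            next
              case False
              then have "cmod (H q) \<le> e" using H(4) qK by blast
              then have "cmod (H q) * cmod (G0 q) \<le> e * M" using M qK e(1) by (intro mult_mono) auto
              then show ?thesis using e by linarith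
            qed
          qed
          have Gp: "cmod (G0 p) \<ge> 3/4 * D^N"
          proof -
            have "cmod (q1 (P n s p) - 1) \<le> \<eta>'" using q1(2) pL dR by (simp add: \<sigma>_def)
            then have "cmod (q1 (P n s p)) \<ge> 3/4" using norm_triangle_ineq3[of "q1 (P n s p)" 1] e' by simp
            moreover have "cmod (P (Suc n) s' p) ^ N \<ge> D^N" using pP D by (intro power_mono) auto
            ultimately have "cmod (q1 (P n s p)) * cmod (P (Suc n) s' p) ^ N \<ge> 3/4 * D^N"
              using DN by (intro mult_mono) auto
            then show ?thesis by (simp add: G0_def norm_mult norm_power)
          qed
          show False by (rule contra[OF p Kne H(1) pG _ Gp bd]) (use H(2) e DN in auto)
        qed
      qed
    qed
  qed
qed

end

lemma open_infinite: "open (S::complex set) \<Longrightarrow> x \<in> S \<Longrightarrow> infinite S"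
  by (rule infinite_openin[of UNIV]) auto

lemma dense_idx:
  fixes a :: "nat \<Rightarrow> complex"
  assumes d: "ball 0 (1/4) \<subseteq> closure {a (h p) | p. Q p}" and c: "cmod c < 1/4" and eta: "\<eta> > 0"
  shows "\<exists>p. Q p \<and> h p \<ge> N \<and> cmod (a (h p) - c) < \<eta>"
proof -
  define Fin where "Fin = a ` {..<N}"
  define W where "W = ball c \<eta> \<inter> ball 0 (1/4)"
  have oW: "open W" and cW: "c \<in> W" using c eta by (auto simp: W_def)
  have "infinite W" by (rule open_infinite[OF oW cW])
  then have ne: "W - Fin \<noteq> {}" unfolding Fin_def
    by (metis Diff_eq_empty_iff finite_imageI finite_lessThan finite_subset)
  have oV: "open (W - Fin)" unfolding Fin_def by (intro open_Diff oW finite_imp_closed) auto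
  have "W - Fin \<subseteq> closure {a (h p) | p. Q p}" using d by (auto simp: W_def)
  then have "(W - Fin) \<inter> closure {a (h p) | p. Q p} \<noteq> {}" using ne by auto
  then have "(W - Fin) \<inter> {a (h p) | p. Q p} \<noteq> {}" using open_Int_closure_eq_empty[OF oV] by blast
  then obtain p where p: "Q p" "a (h p) \<in> W" "a (h p) \<notin> Fin" by blast
  have "h p \<ge> N"
  proof (rule ccontr)
    assume "\<not> h p \<ge> N"
    then have "a (h p) \<in> Fin" unfolding Fin_def by auto
    then show False using p by blast
  qed
  moreover have "cmod (a (h p) - c) < \<eta>" using p(2) by (auto simp: W_def dist_norm norm_minus_commute)
  ultimately show ?thesis using p(1) by blast
qed

context cons begin

lemma disk_branch:
  assumes cont: "continuous_on (ball 0 1) \<phi>" and inX: "\<forall>t\<in>ball 0 1. \<phi> t \<in> Xn a r m k"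
  shows "\<exists>s\<in>S_set r m k. \<forall>t\<in>ball (0::complex) 1. \<phi> t \<in> Xns a r m k s"
proof -
  have "\<phi> 0 \<in> Xn a r m k" using inX by simp
  then obtain s0 where s0: "s0 \<in> S_set r m k" "\<phi> 0 \<in> Xns a r m k s0" by (auto simp: Xn_def)
  define W where "W = \<Union>{Xns a r m k s' | s'. s' \<in> S_set r m k \<and> \<not> (\<forall>j\<in>{1..k}. s0 j = s' j)}"
  have oW: "open W" unfolding W_def using open_Xns by auto
  define U1 where "U1 = ball 0 1 \<inter> \<phi> -` Xns a r m k s0"
  define U2 where "U2 = ball 0 1 \<inter> \<phi> -` W"
  have o1: "open U1" unfolding U1_def by (rule continuous_open_preimage[OF cont open_ball open_Xns])
  have o2: "open U2" unfolding U2_def by (rule continuous_open_preimage[OF cont open_ball oW])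
  have disj: "U1 \<inter> U2 \<inter> ball 0 1 = {}"
    unfolding U1_def U2_def W_def using Xns_disj s0(1) by fastforce
  have cov: "ball 0 1 \<subseteq> U1 \<union> U2"
  proof
    fix t :: complex assume t: "t \<in> ball 0 1"
    then have "\<phi> t \<in> Xn a r m k" using inX by blast
    then obtain s' where s': "s' \<in> S_set r m k" "\<phi> t \<in> Xns a r m k s'" by (auto simp: Xn_def)
    show "t \<in> U1 \<union> U2"
    proof (cases "\<forall>j\<in>{1..k}. s0 j = s' j")
      case True then show ?thesis using Xns_cong[OF True] s' t by (auto simp: U1_def)
    next
      case False then show ?thesis using s' t unfolding U2_def W_def by blast
    qed
  qed
  have "U1 \<inter> ball 0 1 = {} \<or> U2 \<inter> ball 0 1 = {}"
    by (rule connectedD[OF connected_ball o1 o2 disj cov])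
  moreover have "0 \<in> U1 \<inter> ball 0 1" using s0 by (auto simp: U1_def)
  ultimately have "U2 \<inter> ball 0 1 = {}" by blast
  then have "\<forall>t\<in>ball 0 1. \<phi> t \<in> Xns a r m k s0" using cov unfolding U1_def by blast
  then show ?thesis using s0(1) by blast
qed

end

lemma re_contra:
  assumes "cmod x1 \<le> 3/10" "cmod x2 \<le> 3/10" "-1 + x2 = complex_of_real (q^2) * (1 + x1)"
  shows False
proof -
  have "Re (-1 + x2) = q^2 * (1 + Re x1)" using assms(3) by simp
  moreover have "Re x2 \<le> 3/10" using abs_Re_le_cmod[of x2] assms(2) by linarith
  moreover have "Re x1 \<ge> -3/10" using abs_Re_le_cmod[of x1] assms(1) by linarith
  moreover have "q^2 \<ge> 0" by simp
  ultimately have "q^2 * (1 + Re x1) \<ge> 0" "q^2 * (1 + Re x1) < 0" by auto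
  then show False by linarith
qed

context cons begin

lemma core:
  fixes f g F :: "complex \<Rightarrow> complex" and KS :: "nat set"
  assumes fc: "continuous_on (ball 0 1) f" "continuous_on (ball 0 1) g"
    and inX: "\<forall>t\<in>ball 0 1. (f t, g t) \<in> Xlim a r m"
    and t1: "t1 \<in> ball 0 1" and dF: "(F has_field_derivative \<alpha>) (at t1)" and \<alpha>0: "\<alpha> \<noteq> 0"
    and Aeq: "\<And>k t. k \<in> KS \<Longrightarrow> Afun a k (f t, g t) = F t - a k"
    and KS1: "\<And>k. k \<in> KS \<Longrightarrow> k \<ge> 1"
    and dense: "\<And>\<eta> N. \<eta> > 0 \<Longrightarrow> \<exists>k\<in>KS. k \<ge> N \<and> cmod (a k - F t1) < \<eta>"
    and rl: "r \<longlonglongrightarrow> 0"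
  shows False
proof -
  define A where "A = cmod \<alpha>"
  have A: "A > 0" using \<alpha>0 by (simp add: A_def)
  have "((\<lambda>y. (F y - F t1) / (y - t1)) \<longlongrightarrow> \<alpha>) (at t1)" using dF has_field_derivative_iff by blast
  then have "\<forall>\<^sub>F y in at t1. dist ((F y - F t1) / (y - t1)) \<alpha> < A/10" using A by (intro tendstoD) auto
  then obtain d where d: "d > 0" "\<And>y. y \<noteq> t1 \<Longrightarrow> dist y t1 < d \<Longrightarrow> dist ((F y - F t1) / (y - t1)) \<alpha> < A/10"
    by (auto simp: eventually_at)
  have lin: "cmod (F y - F t1 - \<alpha> * (y - t1)) \<le> A/10 * cmod (y - t1)" if y: "dist y t1 < d" for y
  proof (cases "y = t1")
    case True then show ?thesis by simp
  next
    case False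
    then have ne: "y - t1 \<noteq> 0" by simp
    have "F y - F t1 - \<alpha> * (y - t1) = (y - t1) * ((F y - F t1) / (y - t1) - \<alpha>)"
      using ne by (simp add: field_simps)
    then have "cmod (F y - F t1 - \<alpha> * (y - t1)) = cmod (y - t1) * cmod ((F y - F t1) / (y - t1) - \<alpha>)"
      by (simp add: norm_mult)
    also have "\<dots> \<le> cmod (y - t1) * (A/10)"
      using d(2)[OF False y] by (intro mult_left_mono) (auto simp: dist_norm)
    finally show ?thesis by (simp add: mult.commute)
  qed
  have t1n: "cmod t1 < 1" using t1 by simp
  define M where "M = min d (1 - cmod t1)"
  have m1: "M \<le> 1 - cmod t1" "M \<le> d" "M > 0" using d t1n by (auto simp: M_def)
  define \<rho> where "\<rho> = M / 2"
  have rho: "\<rho> > 0" "\<rho> < d" "cmod t1 + \<rho> < 1" using m1 unfolding \<rho>_def by linarith+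
  have "\<forall>\<^sub>F k in sequentially. r k < A * \<rho> / 10"
    using order_tendstoD(2)[OF rl, of "A * \<rho> / 10"] A rho by auto
  then obtain N0 where N0: "\<And>k. k \<ge> N0 \<Longrightarrow> r k < A * \<rho> / 10" by (auto simp: eventually_sequentially)
  obtain k where k: "k \<in> KS" "k \<ge> N0" "cmod (a k - F t1) < A * \<rho> / 10"
    using dense[of "A * \<rho> / 10" N0] A rho by auto
  obtain n where kn: "k = Suc n" using KS1[OF k(1)] by (cases k) auto
  define \<phi> where "\<phi> t = (f t, g t)" for t
  have c\<phi>: "continuous_on (ball 0 1) \<phi>" unfolding \<phi>_def[abs_def] by (intro continuous_on_Pair fc)
  have inXn: "\<forall>t\<in>ball 0 1. \<phi> t \<in> Xn a r m k" using inX by (auto simp: \<phi>_def Xlim_def)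
  obtain s where s: "s \<in> S_set r m k" "\<forall>t\<in>ball 0 1. \<phi> t \<in> Xns a r m k s"
    using disk_branch[OF c\<phi> inXn] by blast
  define \<epsilon>' where "\<epsilon>' = \<epsilon> (Suc n)"
  have ep: "\<epsilon>' > 0" unfolding \<epsilon>'_def by (rule eps_pos)
  define v where "v t = P n s (\<phi> t) - s (Suc n)" for t
  define H where "H t = F t - a k + P (Suc n) s (\<phi> t) / complex_of_real \<epsilon>'" for t
  have vsq: "v t ^ 2 = complex_of_real \<epsilon>' * H t" for t
  proof -
    have "P (Suc n) s (\<phi> t) = v t ^ 2 - complex_of_real \<epsilon>' * (F t - a k)"
      using Aeq[OF k(1), of t] kn by (simp add: v_def \<epsilon>'_def \<phi>_def)
    then show ?thesis using ep by (simp add: H_def field_simps)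
  qed
  have ebound: "cmod (P (Suc n) s (\<phi> t) / complex_of_real \<epsilon>') \<le> A * \<rho> / 20" if t: "t \<in> ball 0 1" for t
  proof -
    have "cmod (P (Suc n) s (\<phi> t)) < \<delta> (Suc n)" using s(2) t kn by (simp add: Xns_def)
    also have "\<dots> = \<epsilon>' * r (Suc n) / 2" unfolding \<epsilon>'_def by (rule delta_Suc_eps)
    finally have "cmod (P (Suc n) s (\<phi> t)) / \<epsilon>' < r (Suc n) / 2" using ep by (simp add: field_simps)
    moreover have "r (Suc n) < A * \<rho> / 10" using N0 k(2) kn by simp
    moreover have "cmod (P (Suc n) s (\<phi> t) / complex_of_real \<epsilon>') = cmod (P (Suc n) s (\<phi> t)) / \<epsilon>'"
      using ep by (simp add: norm_divide)
    ultimately show ?thesis by linarith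
  qed
  define path where "path \<theta> = t1 + complex_of_real \<rho> * cis \<theta>" for \<theta>
  have pball: "path \<theta> \<in> ball 0 1" for \<theta>
  proof -
    have "cmod (path \<theta>) \<le> cmod t1 + cmod (complex_of_real \<rho> * cis \<theta>)" unfolding path_def by (rule norm_triangle_ineq)
    also have "\<dots> = cmod t1 + \<rho>" using rho by (simp add: norm_mult)
    finally show ?thesis using rho by simp
  qed
  have Hb: "cmod (H (path \<theta>) - \<alpha> * complex_of_real \<rho> * cis \<theta>) \<le> 3/10 * (A * \<rho>)" for \<theta>
  proof -
    have dd: "dist (path \<theta>) t1 < d" using rho by (simp add: path_def dist_norm norm_mult)
    have "H (path \<theta>) - \<alpha> * complex_of_real \<rho> * cis \<theta> =
        (F (path \<theta>) - F t1 - \<alpha> * (path \<theta> - t1)) + (F t1 - a k) + P (Suc n) s (\<phi> (path \<theta>)) / complex_of_real \<epsilon>'"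
      by (simp add: H_def path_def algebra_simps)
    then have "cmod (H (path \<theta>) - \<alpha> * complex_of_real \<rho> * cis \<theta>) \<le>
        cmod (F (path \<theta>) - F t1 - \<alpha> * (path \<theta> - t1)) + cmod (F t1 - a k) + cmod (P (Suc n) s (\<phi> (path \<theta>)) / complex_of_real \<epsilon>')"
      by (metis norm_triangle_le norm_triangle_ineq add_mono order_refl)
    also have "\<dots> \<le> A/10 * cmod (path \<theta> - t1) + A * \<rho> / 10 + A * \<rho> / 20"
      using lin[OF dd] k(3) ebound[OF pball] by (intro add_mono) (auto simp: norm_minus_commute)
    also have "cmod (path \<theta> - t1) = \<rho>" using rho by (simp add: path_def norm_mult)
    finally have "cmod (H (path \<theta>) - \<alpha> * complex_of_real \<rho> * cis \<theta>) \<le> A/10 * \<rho> + A * \<rho> / 10 + A * \<rho> / 20" .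
    moreover have "A * \<rho> > 0" using A rho by simp
    ultimately show ?thesis by linarith
  qed
  define z where "z \<theta> = \<alpha> * complex_of_real \<rho> * cis \<theta>" for \<theta>
  have zn: "cmod (z \<theta>) = A * \<rho>" for \<theta> using rho by (simp add: z_def norm_mult A_def)
  have z0: "z \<theta> \<noteq> 0" for \<theta> using zn[of \<theta>] A rho by auto
  define x where "x \<theta> = (H (path \<theta>) - z \<theta>) / z \<theta>" for \<theta>
  have xb: "cmod (x \<theta>) \<le> 3/10" for \<theta>
  proof -
    have "cmod (x \<theta>) = cmod (H (path \<theta>) - z \<theta>) / (A * \<rho>)" by (simp add: x_def norm_divide zn)
    also have "\<dots> \<le> (3/10 * (A * \<rho>)) / (A * \<rho>)" using Hb[of \<theta>] A rho by (intro divide_right_mono) (auto simp: z_def)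
    also have "\<dots> = 3/10" using A rho by simp
    finally show ?thesis .
  qed
  have Hx: "H (path \<theta>) = z \<theta> * (1 + x \<theta>)" for \<theta> using z0[of \<theta>] by (simp add: x_def field_simps)
  have Hnz: "H (path \<theta>) \<noteq> 0" for \<theta>
  proof
    assume "H (path \<theta>) = 0"
    then have "1 + x \<theta> = 0" using Hx[of \<theta>] z0[of \<theta>] by simp
    then have "x \<theta> = -1" by (simp add: add_eq_0_iff)
    then show False using xb[of \<theta>] by simp
  qed
  define u where "u \<theta> = v (path \<theta>)" for \<theta>
  have u0: "u \<theta> \<noteq> 0" for \<theta>
  proof
    assume "u \<theta> = 0"
    then have "complex_of_real \<epsilon>' * H (path \<theta>) = 0" using vsq[of "path \<theta>"] by (simp add: u_def)
    then show False using ep Hnz[of \<theta>] by simp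
  qed
  have cispi: "cis (\<theta> + pi) = - cis \<theta>" for \<theta> by (simp add: cis_def complex_eq_iff)
  have zpi: "z (\<theta> + pi) = - z \<theta>" for \<theta> by (simp add: z_def cispi)
  define Q where "Q \<theta> = u (\<theta> + pi) / u \<theta>" for \<theta>
  have ImQ: "Im (Q \<theta>) \<noteq> 0" for \<theta>
  proof
    assume im: "Im (Q \<theta>) = 0"
    define q where "q = Re (Q \<theta>)"
    have Qq: "Q \<theta> = complex_of_real q" using im by (simp add: q_def complex_eq_iff)
    have "u (\<theta> + pi) = complex_of_real q * u \<theta>" using Qq u0[of \<theta>] by (simp add: Q_def field_simps)
    then have "u (\<theta> + pi) ^ 2 = complex_of_real (q^2) * u \<theta> ^ 2" by (simp add: power_mult_distrib)
    then have "complex_of_real \<epsilon>' * H (path (\<theta> + pi)) = complex_of_real (q^2) * (complex_of_real \<epsilon>' * H (path \<theta>))"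
      using vsq by (simp add: u_def)
    then have "H (path (\<theta> + pi)) = complex_of_real (q^2) * H (path \<theta>)" using ep by (simp add: algebra_simps)
    then have "- z \<theta> * (1 + x (\<theta> + pi)) = complex_of_real (q^2) * (z \<theta> * (1 + x \<theta>))"
      using Hx zpi by metis
    then have "z \<theta> * (-(1 + x (\<theta> + pi))) = z \<theta> * (complex_of_real (q^2) * (1 + x \<theta>))"
      by algebra
    then have "-(1 + x (\<theta> + pi)) = complex_of_real (q^2) * (1 + x \<theta>)" using z0[of \<theta>]
      by (simp only: mult_cancel_left) simp
    then have "-1 + (- x (\<theta> + pi)) = complex_of_real (q^2) * (1 + x \<theta>)" by simp
    moreover have "cmod (- x (\<theta> + pi)) \<le> 3/10" using xb by simp
    ultimately show False using re_contra[OF xb[of \<theta>]] by blast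
  qed
  have cv: "continuous_on (ball 0 1) v" unfolding v_def[abs_def]
    by (intro continuous_intros continuous_on_compose2[OF cont_P c\<phi>]) auto
  have cpath: "continuous_on UNIV path" unfolding path_def[abs_def] by (intro continuous_intros)
  have cu: "continuous_on UNIV u" unfolding u_def[abs_def]
    by (rule continuous_on_compose2[OF cv cpath]) (use pball in auto)
  have cu2: "continuous_on UNIV (\<lambda>\<theta>. u (\<theta> + pi))"
    by (rule continuous_on_compose2[OF cu]) (auto intro!: continuous_intros)
  have cQ: "continuous_on {0..pi} (\<lambda>\<theta>. Im (Q \<theta>))" unfolding Q_def[abs_def]
    by (intro continuous_intros continuous_on_divide continuous_on_subset[OF cu2] continuous_on_subset[OF cu]) (use u0 in auto)
  have upi2: "u (pi + pi) = u 0"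
  proof -
    have "cis (pi + pi) = cis 0" by (simp add: cis_def complex_eq_iff)
    then show ?thesis by (simp add: u_def path_def)
  qed
  have Qpi: "Q pi = inverse (Q 0)" unfolding Q_def upi2 by simp
  have ImQpi: "Im (Q pi) = - Im (Q 0) / ((Re (Q 0))^2 + (Im (Q 0))^2)"
    by (simp add: Qpi power2_eq_square)
  have den: "(Re (Q 0))^2 + (Im (Q 0))^2 > 0" using ImQ[of 0] by (intro add_nonneg_pos) auto
  obtain \<theta> where "0 \<le> \<theta>" "\<theta> \<le> pi" "Im (Q \<theta>) = 0"
  proof (cases "Im (Q 0) > 0")
    case True
    then have "Im (Q pi) < 0" using ImQpi den by (simp add: divide_neg_pos)
    then obtain \<theta> where "\<theta> \<ge> 0" "\<theta> \<le> pi" "Im (Q \<theta>) = 0"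
      using IVT2'[of "\<lambda>\<theta>. Im (Q \<theta>)" pi 0 0, OF _ _ _ cQ] True by fastforce
    then show ?thesis using that by blast
  next
    case False
    then have f: "Im (Q 0) < 0" using ImQ[of 0] by linarith
    then have "Im (Q 0) / ((Re (Q 0))^2 + (Im (Q 0))^2) < 0" using den by (rule divide_neg_pos)
    then have "Im (Q pi) > 0" using ImQpi by simp
    then obtain \<theta> where "\<theta> \<ge> 0" "\<theta> \<le> pi" "Im (Q \<theta>) = 0"
      using IVT'[of "\<lambda>\<theta>. Im (Q \<theta>)" 0 0 pi, OF _ _ _ cQ] f by fastforce
    then show ?thesis using that by blast
  qed
  then show False using ImQ by blast
qed

end

theorem proposition1:
  fixes a :: "nat \<Rightarrow> complex" and r :: "nat \<Rightarrow> real" and m :: "nat \<Rightarrow> nat"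
  assumes a_in: "\<And>n. n \<ge> 1 \<Longrightarrow> a n \<in> ball 0 (1/4)"
    and a_even_dense: "ball 0 (1/4) \<subseteq> closure {a (2 * p) | p. p \<ge> 1}"
    and a_odd_dense: "ball 0 (1/4) \<subseteq> closure {a (2 * p + 1) | p. True}"
    and r_pos: "\<And>n. n \<ge> 1 \<Longrightarrow> r n > 0"
    and r_le: "\<And>n. n \<ge> 1 \<Longrightarrow> r n \<le> 1/10"
    and r_decr: "\<And>n. n \<ge> 1 \<Longrightarrow> r (Suc n) \<le> r n"
    and r_lim: "r \<longlonglongrightarrow> 0"
    and m_pos: "\<And>n. n \<ge> 1 \<Longrightarrow> m n > 0"
  shows "poly_convex (Xlim a r m) \<and> horizontal (Xlim a r m) \<and>
         \<not> contains_holo_disk (Xlim a r m \<inter> {(z, w). norm z < 1/5 \<and> norm w < 1})"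
proof -
  interpret cons a r m by (intro cons.intro) (use a_in r_pos r_le m_pos in auto)
  have PC: "poly_convex (Xlim a r m)"
    unfolding poly_convex_def
  proof (intro allI impI subsetI)
    fix K p assume K: "compact K \<and> K \<subseteq> Xlim a r m" and p: "p \<in> poly_hull K"
    have "p \<in> Xn a r m n" for n using hull_sub_Xn[of K p n] K p by blast
    then show "p \<in> Xlim a r m" by (simp add: Xlim_def)
  qed
  have X0: "Xlim a r m \<subseteq> Xns a r m 0 (\<lambda>k. 0)"
    using Xn0[of "\<lambda>k. 0"] by (auto simp: Xlim_def)
  have HZ: "horizontal (Xlim a r m)"
    unfolding horizontal_def
  proof
    show "Xlim a r m \<subseteq> Bidisk" using X0 by (auto simp: Xns_def)
    show "\<exists>e>0. Xlim a r m \<subseteq> {(z, w). cmod z < 1/2 \<and> cmod w < 1 - e}"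
      using X0 by (intro exI[of _ "1/2"]) (auto simp: Xns_def Bidisk_def)
  qed
  have ND: "\<not> contains_holo_disk (Xlim a r m \<inter> {(z, w). norm z < 1/5 \<and> norm w < 1})"
  proof
    assume "contains_holo_disk (Xlim a r m \<inter> {(z, w). norm z < 1/5 \<and> norm w < 1})"
    then obtain f g where hf: "f holomorphic_on ball 0 1" and hg: "g holomorphic_on ball 0 1"
      and inY: "\<forall>t\<in>ball 0 1. (f t, g t) \<in> Xlim a r m \<inter> {(z, w). norm z < 1/5 \<and> norm w < 1}"
      and nc: "\<exists>t1\<in>ball 0 1. \<exists>t2\<in>ball 0 1. (f t1, g t1) \<noteq> (f t2, g t2)"
      unfolding contains_holo_disk_def by blast
    have inX: "\<forall>t\<in>ball 0 1. (f t, g t) \<in> Xlim a r m" using inY by blast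
    have fb: "cmod (f t) < 1/5" "cmod (g t) < 1" if "t \<in> ball 0 1" for t using inY that by auto
    have cf: "continuous_on (ball 0 1) f" by (rule holomorphic_on_imp_continuous_on[OF hf])
    have cg: "continuous_on (ball 0 1) g" by (rule holomorphic_on_imp_continuous_on[OF hg])
    define F2 where "F2 t = f t + g t / 100" for t
    have hF2: "F2 holomorphic_on ball 0 1" unfolding F2_def[abs_def] using hf hg by (intro holomorphic_intros) auto
    have df: "(f has_field_derivative deriv f t) (at t within T)" if "t \<in> ball 0 1" for t T
      by (rule holomorphic_derivI[OF hf open_ball that])
    have dF2: "(F2 has_field_derivative deriv F2 t) (at t within T)" if "t \<in> ball 0 1" for t T
      by (rule holomorphic_derivI[OF hF2 open_ball that])
    show False
    proof (cases "\<exists>t1\<in>ball 0 1. deriv f t1 \<noteq> 0")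
      case True
      then obtain t1 where t1: "t1 \<in> ball 0 1" "deriv f t1 \<noteq> 0" by blast
      show False
      proof (rule core[OF cf cg inX t1(1) df[OF t1(1)] t1(2), of "{k. odd k}"])
        show "\<And>k t. k \<in> {k. odd k} \<Longrightarrow> Afun a k (f t, g t) = f t - a k" by (simp add: Afun_def)
        show "k \<ge> 1" if "k \<in> {k. odd k}" for k :: nat
        proof -
          have "k \<noteq> 0" using odd_pos[of k] that by simp
          then show ?thesis by simp
        qed
        show "\<exists>k\<in>{k. odd k}. k \<ge> N \<and> cmod (a k - f t1) < \<eta>" if eta: "\<eta> > 0" for \<eta> N
        proof -
          have "cmod (f t1) < 1/4" using fb(1)[OF t1(1)] by simp
          then obtain p where "2 * p + 1 \<ge> N" "cmod (a (2 * p + 1) - f t1) < \<eta>"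
            using dense_idx[of a "\<lambda>p. 2 * p + 1" "\<lambda>p. True", OF a_odd_dense _ eta] by auto
          then show ?thesis by (intro bexI[of _ "2 * p + 1"]) auto
        qed
        show "r \<longlonglongrightarrow> 0" by (rule r_lim)
      qed
    next
      case False
      then have f0: "\<forall>t\<in>ball 0 1. deriv f t = 0" by blast
      show False
      proof (cases "\<exists>t1\<in>ball 0 1. deriv F2 t1 \<noteq> 0")
        case True
        then obtain t1 where t1: "t1 \<in> ball 0 1" "deriv F2 t1 \<noteq> 0" by blast
        show False
        proof (rule core[OF cf cg inX t1(1) dF2[OF t1(1)] t1(2), of "{k. even k \<and> k \<ge> 1}"])
          show "\<And>k t. k \<in> {k. even k \<and> k \<ge> 1} \<Longrightarrow> Afun a k (f t, g t) = F2 t - a k"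
            by (simp add: Afun_def F2_def)
          show "\<And>k. k \<in> {k. even k \<and> k \<ge> 1} \<Longrightarrow> k \<ge> 1" by simp
          show "\<exists>k\<in>{k. even k \<and> k \<ge> 1}. k \<ge> N \<and> cmod (a k - F2 t1) < \<eta>" if eta: "\<eta> > 0" for \<eta> N
          proof -
            have "cmod (F2 t1) \<le> cmod (f t1) + cmod (g t1 / 100)" unfolding F2_def by (rule norm_triangle_ineq)
            then have "cmod (F2 t1) < 1/4" using fb[OF t1(1)] by (simp add: norm_divide)
            then obtain p where "p \<ge> 1" "2 * p \<ge> N" "cmod (a (2 * p) - F2 t1) < \<eta>"
              using dense_idx[of a "\<lambda>p. 2 * p" "\<lambda>p. p \<ge> 1", OF a_even_dense _ eta] by auto
            then show ?thesis by (intro bexI[of _ "2 * p"]) auto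
          qed
          show "r \<longlonglongrightarrow> 0" by (rule r_lim)
        qed
      next
        case False
        then have F0: "\<forall>t\<in>ball 0 1. deriv F2 t = 0" by blast
        have "\<exists>c. \<forall>x\<in>ball 0 1. f x = c"
        proof (rule has_field_derivative_zero_constant[OF convex_ball])
          fix x :: complex assume x: "x \<in> ball 0 1"
          show "(f has_field_derivative 0) (at x within ball 0 1)" using df[OF x, of "ball 0 1"] f0 x by simp
        qed
        then obtain c1 where c1: "\<forall>t\<in>ball 0 1. f t = c1" by blast
        have "\<exists>c. \<forall>x\<in>ball 0 1. F2 x = c"
        proof (rule has_field_derivative_zero_constant[OF convex_ball])
          fix x :: complex assume x: "x \<in> ball 0 1"
          show "(F2 has_field_derivative 0) (at x within ball 0 1)" using dF2[OF x, of "ball 0 1"] F0 x by simp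
        qed
        then obtain c2 where c2: "\<forall>t\<in>ball 0 1. F2 t = c2" by blast
        have gc: "g t = 100 * (c2 - c1)" if "t \<in> ball 0 1" for t
        proof -
          have "f t + g t / 100 = c2" "f t = c1" using c1 c2 that by (auto simp: F2_def)
          then show ?thesis by (simp add: field_simps)
        qed
        obtain t1 t2 where tt: "t1 \<in> ball 0 1" "t2 \<in> ball 0 1" "(f t1, g t1) \<noteq> (f t2, g t2)" using nc by blast
        have "f t1 = f t2" using c1 tt by simp
        moreover have "g t1 = g t2" using gc tt by simp
        ultimately show False using tt(3) by simp
      qed
    qed
  qed
  show ?thesis using PC HZ ND by blast
qed

end
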